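(* Let $X$ be a complex Banach space and $T: X \to X$ a bounded linear operator, with Banach-space adjoint $T^*: X^* \to X^*$. Assume that for every non-empty relatively open subset $U \subseteq \sigma(T)$, the glocal spectral subspace $\mathcal{X}_T(\overline{U})$ is dense in $X$. Then $\mathcal{X}^*_{T^*}(F) = \{0\}$ for every closed set $F \subsetneq \sigma(T^* )$. Moreover: (i) if $\sigma(T^* )$ is not a singleton, then the point spectrum $\sigma_p(T^* )$ is empty; (ii) $T^*$ has Dunford's property $(C)$; (iii) $\sigma_{T^*}(x) = \sigma(T^* )$ for every $x \in X^* \setminus \{0\}$; (iv) $r_{T^*}(x) = r(T^* )$ for every $x \in X^*\setminus\{0\}$; (v) if $M$ is any non-trivial closed $T^*$-invariant subspace of $X^*$, then $\sigma(T^* ) \subseteq \sigma(T^*|_M) \subseteq \eta(\sigma(T^* ))$.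
   Context: For a bounded operator $T$ on a Banach space $X$: $T$ has the single-valued extension property (SVEP) if for every open $U \subseteq \mathbb{C}$ and every analytic $f: U \to X$ with $(T - zI)f(z) = 0$ for all $z \in U$, one has $f \equiv 0$. The local resolvent set $\rho_T(x)$ of $x \in X$ is the union of all open $U \subseteq \mathbb{C}$ on which there is an analytic $f: U\to X$ with $(T-zI)f(z) = x$ for $z\in U$; the local spectrum is $\sigma_T(x) = \mathbb{C}\setminus \rho_T(x)$. For $F \subseteq \mathbb{C}$, the local spectral subspace is $X_T(F) = \{x \in X : \sigma_T(x) \subseteq F\}$. $T$ has Dunford's property $(C)$ if $X_T(F)$ is closed for every closed $F \subseteq \mathbb{C}$. For closed $F \subseteq \mathbb{C}$, the glocal spectral subspace $\mathcal{X}_T(F)$ is the set of $x \in X$ for which there exists an analytic $f: \mathbb{C}\setminus F \to X$ with $(T - zI)f(z) = x$ for all $z \in \mathbb{C}\setminus F$ (for $T^*$ on $X^*$ this is denoted $\mathcal{X}^*_{T^*}(F)$). The local spectral radius is $r_T(x) = \limsup_{n\to\infty}\|T^n x\|^{1/n}$; $r(T)$ is the spectral radius. The full spectrum $\eta(\sigma(T))$ is the union of $\sigma(T)$ with all bounded connected components of $\mathbb{C}\setminus\sigma(T)$. *)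

theory Defs
  imports "HOL-Analysis.Analysis"
begin

text \<open>HOL-Analysis has only real normed spaces.  A complex Banach space is a real
Banach space together with a complex scalar multiplication compatible with the
real one and with the norm.\<close>

class complex_banach = banach +
  fixes scaleC :: "complex \<Rightarrow> 'a \<Rightarrow> 'a"
  assumes scaleC_add_right: "scaleC a (x + y) = scaleC a x + scaleC a y"
    and scaleC_add_left: "scaleC (a + b) x = scaleC a x + scaleC b x"
    and scaleC_scaleC: "scaleC a (scaleC b x) = scaleC (a * b) x"
    and scaleC_of_real: "scaleC (of_real r) x = scaleR r x"
    and norm_scaleC: "norm (scaleC a x) = cmod a * norm x"

definition bounded_clinear_op :: "('a::complex_banach \<Rightarrow> 'a) \<Rightarrow> bool" where
  "bounded_clinear_op T \<longleftrightarrow> bounded_linear T \<and> (\<forall>c x. T (scaleC c x) = scaleC c (T x))"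

definition op_spectrum :: "('a::complex_banach \<Rightarrow> 'a) \<Rightarrow> complex set" where
  "op_spectrum T = {z. \<not> (\<exists>S. bounded_linear S \<and>
       (\<forall>x. S (T x - scaleC z x) = x) \<and> (\<forall>x. T (S x) - scaleC z (S x) = x))}"

definition X_analytic_on :: "(complex \<Rightarrow> 'a::complex_banach) \<Rightarrow> complex set \<Rightarrow> bool" where
  "X_analytic_on f U \<longleftrightarrow> open U \<and>
     (\<forall>z\<in>U. \<exists>g. ((\<lambda>w. scaleC (inverse (w - z)) (f w - f z)) \<longlongrightarrow> g) (at z))"

definition glocal_subspace :: "('a::complex_banach \<Rightarrow> 'a) \<Rightarrow> complex set \<Rightarrow> 'a set" where
  "glocal_subspace T F = {x. \<exists>f. X_analytic_on f (- F) \<and>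
       (\<forall>z\<in>- F. T (f z) - scaleC z (f z) = x)}"

definition cdual :: "('a::complex_banach \<Rightarrow> complex) set" where
  "cdual = {\<phi>. bounded_linear \<phi> \<and> (\<forall>c x. \<phi> (scaleC c x) = c * \<phi> x)}"

definition dnorm :: "('a::complex_banach \<Rightarrow> complex) \<Rightarrow> real" where
  "dnorm \<phi> = onorm \<phi>"

definition adj :: "('a::complex_banach \<Rightarrow> 'a) \<Rightarrow> ('a \<Rightarrow> complex) \<Rightarrow> ('a \<Rightarrow> complex)" where
  "adj T \<phi> = (\<lambda>x. \<phi> (T x))"

definition dshift :: "(('a \<Rightarrow> complex) \<Rightarrow> ('a \<Rightarrow> complex)) \<Rightarrow> complex \<Rightarrow> ('a \<Rightarrow> complex) \<Rightarrow> ('a \<Rightarrow> complex)" where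
  "dshift A z \<phi> = (\<lambda>x. A \<phi> x - z * \<phi> x)"

definition dspectrum_on ::
  "('a::complex_banach \<Rightarrow> complex) set \<Rightarrow> (('a \<Rightarrow> complex) \<Rightarrow> ('a \<Rightarrow> complex)) \<Rightarrow> complex set" where
  "dspectrum_on V A = {z. \<not> (\<exists>S. (\<forall>\<phi>\<in>V. S \<phi> \<in> V) \<and>
       (\<exists>K. \<forall>\<phi>\<in>V. dnorm (S \<phi>) \<le> K * dnorm \<phi>) \<and>
       (\<forall>\<phi>\<in>V. S (dshift A z \<phi>) = \<phi>) \<and> (\<forall>\<phi>\<in>V. dshift A z (S \<phi>) = \<phi>))}"

definition adj_spectrum :: "('a::complex_banach \<Rightarrow> 'a) \<Rightarrow> complex set" where
  "adj_spectrum T = dspectrum_on cdual (adj T)"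

definition adj_point_spectrum :: "('a::complex_banach \<Rightarrow> 'a) \<Rightarrow> complex set" where
  "adj_point_spectrum T = {z. \<exists>\<phi>\<in>cdual. \<phi> \<noteq> (\<lambda>x. 0) \<and> dshift (adj T) z \<phi> = (\<lambda>x. 0)}"

definition dual_analytic_on :: "(complex \<Rightarrow> ('a::complex_banach \<Rightarrow> complex)) \<Rightarrow> complex set \<Rightarrow> bool" where
  "dual_analytic_on f U \<longleftrightarrow> open U \<and> (\<forall>z\<in>U. f z \<in> cdual) \<and>
     (\<forall>z\<in>U. \<exists>g\<in>cdual.
        ((\<lambda>w. dnorm (\<lambda>x. (f w x - f z x) / (w - z) - g x)) \<longlongrightarrow> 0) (at z))"

definition adj_local_resolvent :: "('a::complex_banach \<Rightarrow> 'a) \<Rightarrow> ('a \<Rightarrow> complex) \<Rightarrow> complex set" where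
  "adj_local_resolvent T \<phi> = \<Union>{U. \<exists>f. dual_analytic_on f U \<and>
       (\<forall>z\<in>U. dshift (adj T) z (f z) = \<phi>)}"

definition adj_local_spectrum :: "('a::complex_banach \<Rightarrow> 'a) \<Rightarrow> ('a \<Rightarrow> complex) \<Rightarrow> complex set" where
  "adj_local_spectrum T \<phi> = - adj_local_resolvent T \<phi>"

definition adj_local_subspace :: "('a::complex_banach \<Rightarrow> 'a) \<Rightarrow> complex set \<Rightarrow> ('a \<Rightarrow> complex) set" where
  "adj_local_subspace T F = {\<phi>\<in>cdual. adj_local_spectrum T \<phi> \<subseteq> F}"

definition adj_glocal_subspace :: "('a::complex_banach \<Rightarrow> 'a) \<Rightarrow> complex set \<Rightarrow> ('a \<Rightarrow> complex) set" where
  "adj_glocal_subspace T F = {\<phi>\<in>cdual. \<exists>f. dual_analytic_on f (- F) \<and>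
       (\<forall>z\<in>- F. dshift (adj T) z (f z) = \<phi>)}"

definition dclosed :: "('a::complex_banach \<Rightarrow> complex) set \<Rightarrow> bool" where
  "dclosed M \<longleftrightarrow> M \<subseteq> cdual \<and>
     (\<forall>s \<phi>. (\<forall>n. s n \<in> M) \<longrightarrow> \<phi> \<in> cdual \<longrightarrow>
        ((\<lambda>n. dnorm (\<lambda>x. s n x - \<phi> x)) \<longlonglongrightarrow> 0) \<longrightarrow> \<phi> \<in> M)"

definition adj_property_C :: "('a::complex_banach \<Rightarrow> 'a) \<Rightarrow> bool" where
  "adj_property_C T \<longleftrightarrow> (\<forall>F. closed F \<longrightarrow> dclosed (adj_local_subspace T F))"

definition dsubspace :: "('a::complex_banach \<Rightarrow> complex) set \<Rightarrow> bool" where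
  "dsubspace M \<longleftrightarrow> M \<subseteq> cdual \<and> (\<lambda>x. 0) \<in> M \<and>
     (\<forall>\<phi>\<in>M. \<forall>\<psi>\<in>M. (\<lambda>x. \<phi> x + \<psi> x) \<in> M) \<and> (\<forall>c. \<forall>\<phi>\<in>M. (\<lambda>x. c * \<phi> x) \<in> M)"

definition adj_local_spectral_radius :: "('a::complex_banach \<Rightarrow> 'a) \<Rightarrow> ('a \<Rightarrow> complex) \<Rightarrow> ereal" where
  "adj_local_spectral_radius T \<phi> = limsup (\<lambda>n. ereal (root n (dnorm ((adj T ^^ n) \<phi>))))"

definition adj_spectral_radius :: "('a::complex_banach \<Rightarrow> 'a) \<Rightarrow> real" where
  "adj_spectral_radius T = Sup (cmod ` adj_spectrum T)"

definition full_spectrum :: "complex set \<Rightarrow> complex set" where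
  "full_spectrum K = K \<union> \<Union>{C. C \<in> components (- K) \<and> bounded C}"

end

theory Submission
  imports Defs "HOL-Complex_Analysis.Complex_Analysis"
begin


lemma scaleC_zero_right [simp]: "scaleC c (0::'a::complex_banach) = 0"
  using scaleC_add_right[of c "0::'a" 0] by simp

lemma scaleC_zero_left [simp]: "scaleC 0 (x::'a::complex_banach) = 0"
  using scaleC_of_real[of 0 x] by simp

lemma scaleC_one [simp]: "scaleC 1 (x::'a::complex_banach) = x"
  using scaleC_of_real[of 1 x] by simp

lemma scaleC_minus_right: "scaleC c (- x) = - scaleC c (x::'a::complex_banach)"
proof -
  have "scaleC c x + scaleC c (- x) = 0" using scaleC_add_right[of c x "-x"] by simp
  then show ?thesis by (rule minus_unique[symmetric])
qed

lemma scaleC_diff_right: "scaleC c (x - y) = scaleC c x - scaleC c (y::'a::complex_banach)"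
  using scaleC_add_right[of c x "-y"] by (simp add: scaleC_minus_right)

lemma scaleC_diff_left: "scaleC (a - b) x = scaleC a x - scaleC b (x::'a::complex_banach)"
  using scaleC_add_left[of "a - b" b x] by (simp add: algebra_simps)

lemma scaleC_comm: "scaleC a (scaleC b x) = scaleC b (scaleC a (x::'a::complex_banach))"
  by (simp add: scaleC_scaleC mult.commute)

lemma scaleR_as_scaleC: "scaleR r (x::'a::complex_banach) = scaleC (of_real r) x"
  by (simp add: scaleC_of_real)

lemma bcop_linear: "bounded_clinear_op T \<Longrightarrow> bounded_linear T"
  by (simp add: bounded_clinear_op_def)

lemma bcop_scaleC: "bounded_clinear_op T \<Longrightarrow> T (scaleC c x) = scaleC c (T x)"
  by (simp add: bounded_clinear_op_def)

lemma bcop_add: "bounded_clinear_op T \<Longrightarrow> T (x + y) = T x + T y"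
  using bcop_linear linear_add bounded_linear.linear by blast

lemma bcop_diff: "bounded_clinear_op T \<Longrightarrow> T (x - y) = T x - T y"
  using bcop_linear linear_diff bounded_linear.linear by blast

lemma bcop_norm: "bounded_clinear_op T \<Longrightarrow> norm (T x) \<le> onorm T * norm x"
  using bcop_linear onorm by blast

lemma bcop_onorm_nonneg: "bounded_clinear_op T \<Longrightarrow> 0 \<le> onorm T"
  using bcop_linear onorm_pos_le by blast

lemma shift_lower:
  assumes "bounded_clinear_op T"
  shows "(cmod z - onorm T) * norm y \<le> norm (T y - scaleC z y)"
proof -
  have "cmod z * norm y = norm (scaleC z y)" by (simp add: norm_scaleC)
  also have "\<dots> \<le> norm (T y - scaleC z y) + norm (T y)"
    by (metis add.commute norm_minus_commute norm_triangle_ineq4 diff_add_cancel norm_triangle_sub)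
  finally show ?thesis using bcop_norm[OF assms, of y] by (simp add: algebra_simps)
qed

lemma cdualD_bl: "\<phi> \<in> cdual \<Longrightarrow> bounded_linear \<phi>"
  by (simp add: cdual_def)

lemma cdualD_scaleC: "\<phi> \<in> cdual \<Longrightarrow> \<phi> (scaleC c x) = c * \<phi> x"
  by (simp add: cdual_def)

lemma cdual_add: "\<phi> \<in> cdual \<Longrightarrow> \<phi> (x + y) = \<phi> x + \<phi> y"
  using cdualD_bl linear_add bounded_linear.linear by blast

lemma cdual_diff: "\<phi> \<in> cdual \<Longrightarrow> \<phi> (x - y) = \<phi> x - \<phi> y"
  using cdualD_bl linear_diff bounded_linear.linear by blast

lemma cdual_zero: "\<phi> \<in> cdual \<Longrightarrow> \<phi> 0 = 0"
  using cdualD_bl linear_0 bounded_linear.linear by blast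

lemma cdual_eval: "\<phi> \<in> cdual \<Longrightarrow> cmod (\<phi> x) \<le> dnorm \<phi> * norm x"
  unfolding dnorm_def using cdualD_bl onorm by blast

lemma dnorm_nonneg: "\<phi> \<in> cdual \<Longrightarrow> 0 \<le> dnorm \<phi>"
  unfolding dnorm_def using cdualD_bl onorm_pos_le by blast

lemma dnorm_le: "0 \<le> B \<Longrightarrow> (\<And>x. cmod (\<phi> x) \<le> B * norm x) \<Longrightarrow> dnorm \<phi> \<le> B"
  unfolding dnorm_def by (rule onorm_bound)

lemma cdualI:
  assumes "\<And>x y. \<phi> (x + y) = \<phi> x + \<phi> y" "\<And>c x. \<phi> (scaleC c x) = c * \<phi> x"
    "\<And>x. cmod (\<phi> x) \<le> K * norm x"
  shows "\<phi> \<in> cdual"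
proof -
  have "bounded_linear \<phi>"
  proof (rule bounded_linear_intro[where K=K])
    show "\<phi> (scaleR r x) = scaleR r (\<phi> x)" for r x
      using assms(2)[of "of_real r" x] by (simp add: scaleR_as_scaleC scaleR_conv_of_real)
    show "cmod (\<phi> x) \<le> norm x * K" for x using assms(3)[of x] by (simp add: mult.commute)
  qed (use assms in auto)
  then show ?thesis using assms(2) by (simp add: cdual_def)
qed

lemma cdual_0 [simp]: "(\<lambda>x. 0) \<in> cdual"
  by (rule cdualI[where K=0]) simp_all

lemma dnorm_zero_iff:
  assumes "\<phi> \<in> cdual" shows "dnorm \<phi> = 0 \<longleftrightarrow> \<phi> = (\<lambda>x. 0)"
proof
  assume "dnorm \<phi> = 0"
  then have "cmod (\<phi> x) \<le> 0" for x using cdual_eval[OF assms, of x] by simp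
  then show "\<phi> = (\<lambda>x. 0)" by (simp add: fun_eq_iff)
next
  assume z: "\<phi> = (\<lambda>x. 0)"
  have "dnorm \<phi> \<le> 0" by (rule dnorm_le) (simp_all add: z)
  then show "dnorm \<phi> = 0" using dnorm_nonneg[OF assms] by linarith
qed

lemma dnorm_0 [simp]: "dnorm (\<lambda>x. 0::complex) = (0::real)"
  using dnorm_zero_iff[OF cdual_0] by simp

lemma eval_plus_bound: "\<phi> \<in> cdual \<Longrightarrow> \<psi> \<in> cdual \<Longrightarrow> cmod (\<phi> x + \<psi> x) \<le> (dnorm \<phi> + dnorm \<psi>) * norm x"
  by (rule order_trans[OF norm_triangle_ineq]) (simp add: distrib_right add_mono cdual_eval)

lemma eval_minus_bound: "\<phi> \<in> cdual \<Longrightarrow> \<psi> \<in> cdual \<Longrightarrow> cmod (\<phi> x - \<psi> x) \<le> (dnorm \<phi> + dnorm \<psi>) * norm x"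
  by (rule order_trans[OF norm_triangle_ineq4]) (simp add: distrib_right add_mono cdual_eval)

lemma eval_adj_bound: "bounded_clinear_op T \<Longrightarrow> \<phi> \<in> cdual \<Longrightarrow> cmod (\<phi> (T x)) \<le> (onorm T * dnorm \<phi>) * norm x"
proof -
  assume a: "bounded_clinear_op T" "\<phi> \<in> cdual"
  have "cmod (\<phi> (T x)) \<le> dnorm \<phi> * norm (T x)" using cdual_eval[OF a(2)] .
  also have "\<dots> \<le> dnorm \<phi> * (onorm T * norm x)"
    by (rule mult_left_mono[OF bcop_norm[OF a(1)] dnorm_nonneg[OF a(2)]])
  finally show ?thesis by (simp add: algebra_simps)
qed

lemma cdual_plus: "\<phi> \<in> cdual \<Longrightarrow> \<psi> \<in> cdual \<Longrightarrow> (\<lambda>x. \<phi> x + \<psi> x) \<in> cdual"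
proof (rule cdualI[where K="dnorm \<phi> + dnorm \<psi>"])
  assume a: "\<phi> \<in> cdual" "\<psi> \<in> cdual"
  show "\<phi> (x + y) + \<psi> (x + y) = \<phi> x + \<psi> x + (\<phi> y + \<psi> y)" for x y
    using cdual_add[OF a(1)] cdual_add[OF a(2)] by simp
  show "\<phi> (scaleC c x) + \<psi> (scaleC c x) = c * (\<phi> x + \<psi> x)" for c x
    using cdualD_scaleC[OF a(1)] cdualD_scaleC[OF a(2)] by (simp add: distrib_left)
  show "cmod (\<phi> x + \<psi> x) \<le> (dnorm \<phi> + dnorm \<psi>) * norm x" for x
    using eval_plus_bound[OF a] .
qed

lemma cdual_minus: "\<phi> \<in> cdual \<Longrightarrow> \<psi> \<in> cdual \<Longrightarrow> (\<lambda>x. \<phi> x - \<psi> x) \<in> cdual"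
proof (rule cdualI[where K="dnorm \<phi> + dnorm \<psi>"])
  assume a: "\<phi> \<in> cdual" "\<psi> \<in> cdual"
  show "\<phi> (x + y) - \<psi> (x + y) = \<phi> x - \<psi> x + (\<phi> y - \<psi> y)" for x y
    using cdual_add[OF a(1)] cdual_add[OF a(2)] by simp
  show "\<phi> (scaleC c x) - \<psi> (scaleC c x) = c * (\<phi> x - \<psi> x)" for c x
    using cdualD_scaleC[OF a(1)] cdualD_scaleC[OF a(2)] by (simp add: right_diff_distrib)
  show "cmod (\<phi> x - \<psi> x) \<le> (dnorm \<phi> + dnorm \<psi>) * norm x" for x
    using eval_minus_bound[OF a] .
qed

lemma eval_cmult_bound: "\<phi> \<in> cdual \<Longrightarrow> cmod (c * \<phi> x) \<le> (cmod c * dnorm \<phi>) * norm x"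
  by (simp add: norm_mult mult.assoc mult_left_mono cdual_eval)

lemma cdual_cmult: "\<phi> \<in> cdual \<Longrightarrow> (\<lambda>x. c * \<phi> x) \<in> cdual"
proof (rule cdualI[where K="cmod c * dnorm \<phi>"])
  assume a: "\<phi> \<in> cdual"
  show "c * \<phi> (x + y) = c * \<phi> x + c * \<phi> y" for x y
    using cdual_add[OF a] by (simp add: distrib_left)
  show "c * \<phi> (scaleC d x) = d * (c * \<phi> x)" for d x
    using cdualD_scaleC[OF a] by simp
  show "cmod (c * \<phi> x) \<le> (cmod c * dnorm \<phi>) * norm x" for x
    using eval_cmult_bound[OF a] .
qed

lemma dnorm_cmult: "\<phi> \<in> cdual \<Longrightarrow> dnorm (\<lambda>x. c * \<phi> x) \<le> cmod c * dnorm \<phi>"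
proof -
  assume a: "\<phi> \<in> cdual"
  show ?thesis by (rule dnorm_le[OF mult_nonneg_nonneg[OF norm_ge_zero dnorm_nonneg[OF a]]]) (rule eval_cmult_bound[OF a])
qed

lemma dnorm_triangle: "\<phi> \<in> cdual \<Longrightarrow> \<psi> \<in> cdual \<Longrightarrow> dnorm (\<lambda>x. \<phi> x + \<psi> x) \<le> dnorm \<phi> + dnorm \<psi>"
proof -
  assume a: "\<phi> \<in> cdual" "\<psi> \<in> cdual"
  show ?thesis by (rule dnorm_le[OF add_nonneg_nonneg[OF dnorm_nonneg[OF a(1)] dnorm_nonneg[OF a(2)]]]) (rule eval_plus_bound[OF a])
qed

lemma dnorm_triangle_minus: "\<phi> \<in> cdual \<Longrightarrow> \<psi> \<in> cdual \<Longrightarrow> dnorm (\<lambda>x. \<phi> x - \<psi> x) \<le> dnorm \<phi> + dnorm \<psi>"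
proof -
  assume a: "\<phi> \<in> cdual" "\<psi> \<in> cdual"
  show ?thesis by (rule dnorm_le[OF add_nonneg_nonneg[OF dnorm_nonneg[OF a(1)] dnorm_nonneg[OF a(2)]]]) (rule eval_minus_bound[OF a])
qed

lemma dnorm_minus_commute: "dnorm (\<lambda>x. \<phi> x - \<psi> x) = dnorm (\<lambda>x. \<psi> x - \<phi> x)"
proof -
  have e: "\<And>x. cmod (\<phi> x - \<psi> x) = cmod (\<psi> x - \<phi> x)" by (rule norm_minus_commute)
  show ?thesis unfolding dnorm_def onorm_def by (simp only: e)
qed

lemma cdual_adj: "bounded_clinear_op T \<Longrightarrow> \<phi> \<in> cdual \<Longrightarrow> adj T \<phi> \<in> cdual"
  unfolding adj_def
proof (rule cdualI[where K="onorm T * dnorm \<phi>"])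
  assume a: "bounded_clinear_op T" "\<phi> \<in> cdual"
  show "\<phi> (T (x + y)) = \<phi> (T x) + \<phi> (T y)" for x y
    using cdual_add[OF a(2)] bcop_add[OF a(1)] by simp
  show "\<phi> (T (scaleC c x)) = c * \<phi> (T x)" for c x
    using cdualD_scaleC[OF a(2)] bcop_scaleC[OF a(1)] by simp
  show "cmod (\<phi> (T x)) \<le> (onorm T * dnorm \<phi>) * norm x" for x
    using eval_adj_bound[OF a] .
qed

lemma dnorm_adj: "bounded_clinear_op T \<Longrightarrow> \<phi> \<in> cdual \<Longrightarrow> dnorm (adj T \<phi>) \<le> onorm T * dnorm \<phi>"
proof -
  assume a: "bounded_clinear_op T" "\<phi> \<in> cdual"
  show ?thesis unfolding adj_def
    by (rule dnorm_le[OF mult_nonneg_nonneg[OF bcop_onorm_nonneg[OF a(1)] dnorm_nonneg[OF a(2)]]]) (rule eval_adj_bound[OF a])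
qed

lemma cdual_dshift: "bounded_clinear_op T \<Longrightarrow> \<phi> \<in> cdual \<Longrightarrow> dshift (adj T) z \<phi> \<in> cdual"
  unfolding dshift_def by (rule cdual_minus[OF cdual_adj cdual_cmult])

lemma dshift_apply: "dshift (adj T) z \<phi> x = \<phi> (T x) - z * \<phi> x"
  by (simp add: dshift_def adj_def)


section \<open>Scalarization\<close>

lemma X_analytic_holo:
  assumes f: "X_analytic_on f U" and \<phi>: "\<phi> \<in> cdual"
  shows "(\<lambda>z. \<phi> (f z)) holomorphic_on U"
proof -
  have U: "open U" using f by (simp add: X_analytic_on_def)
  show ?thesis unfolding holomorphic_on_open[OF U]
  proof
    fix z assume z: "z \<in> U"
    then obtain g where g: "((\<lambda>w. scaleC (inverse (w - z)) (f w - f z)) \<longlongrightarrow> g) (at z)"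
      using f by (auto simp: X_analytic_on_def)
    have "((\<lambda>w. \<phi> (scaleC (inverse (w - z)) (f w - f z))) \<longlongrightarrow> \<phi> g) (at z)"
      by (rule bounded_linear.tendsto[OF cdualD_bl[OF \<phi>] g])
    moreover have "\<phi> (scaleC (inverse (w - z)) (f w - f z)) = (\<phi> (f w) - \<phi> (f z)) / (w - z)" for w
      by (simp add: cdualD_scaleC[OF \<phi>] cdual_diff[OF \<phi>] divide_inverse mult.commute)
    ultimately have "((\<lambda>w. (\<phi> (f w) - \<phi> (f z)) / (w - z)) \<longlongrightarrow> \<phi> g) (at z)" by simp
    then show "\<exists>f'. ((\<lambda>z. \<phi> (f z)) has_field_derivative f') (at z)"
      by (auto simp: has_field_derivative_iff)
  qed
qed

lemma cdual_quot:
  assumes "a \<in> cdual" "b \<in> cdual" "c \<in> cdual"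
  shows "(\<lambda>y. (a y - b y) / d - c y) \<in> cdual"
proof -
  have "(\<lambda>y. inverse d * (a y - b y) - c y) \<in> cdual"
    by (rule cdual_minus[OF cdual_cmult[OF cdual_minus[OF assms(1,2)]] assms(3)])
  then show ?thesis by (simp add: divide_inverse mult.commute)
qed

lemma dual_analytic_onD:
  assumes "dual_analytic_on f U" "z \<in> U"
  obtains G where "G \<in> cdual"
    "((\<lambda>w. dnorm (\<lambda>x. (f w x - f z x) / (w - z) - G x)) \<longlongrightarrow> 0) (at z)"
  using assms by (auto simp: dual_analytic_on_def)

lemma dual_analytic_open: "dual_analytic_on f U \<Longrightarrow> open U"
  by (simp add: dual_analytic_on_def)

lemma dual_analytic_in: "dual_analytic_on f U \<Longrightarrow> z \<in> U \<Longrightarrow> f z \<in> cdual"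
  by (simp add: dual_analytic_on_def)

lemma dual_analytic_holo:
  assumes g: "dual_analytic_on g U"
  shows "(\<lambda>z. g z x) holomorphic_on U"
proof -
  have U: "open U" using g by (simp add: dual_analytic_on_def)
  show ?thesis unfolding holomorphic_on_open[OF U]
  proof
    fix z assume z: "z \<in> U"
    obtain G where G: "G \<in> cdual"
      and lim: "((\<lambda>w. dnorm (\<lambda>y. (g w y - g z y) / (w - z) - G y)) \<longlongrightarrow> 0) (at z)"
      using dual_analytic_onD[OF g z] by blast
    have ev: "eventually (\<lambda>w. w \<in> U) (at z)" by (rule eventually_at_in_open'[OF U z])
    have "eventually (\<lambda>w. norm ((g w x - g z x) / (w - z) - G x)
              \<le> dnorm (\<lambda>y. (g w y - g z y) / (w - z) - G y) * norm x) (at z)"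
    proof (rule eventually_mono[OF ev])
      fix w assume w: "w \<in> U"
      show "norm ((g w x - g z x) / (w - z) - G x)
              \<le> dnorm (\<lambda>y. (g w y - g z y) / (w - z) - G y) * norm x"
        using cdual_eval[OF cdual_quot[OF dual_analytic_in[OF g w] dual_analytic_in[OF g z] G], of x]
        by simp
    qed
    moreover have "((\<lambda>w. dnorm (\<lambda>y. (g w y - g z y) / (w - z) - G y) * norm x) \<longlongrightarrow> 0) (at z)"
      by (rule tendsto_mult_left_zero[OF lim])
    ultimately have "((\<lambda>w. (g w x - g z x) / (w - z) - G x) \<longlongrightarrow> 0) (at z)"
      by (rule Lim_null_comparison)
    then have "((\<lambda>w. (g w x - g z x) / (w - z)) \<longlongrightarrow> G x) (at z)"
      by (simp add: LIM_zero_iff)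
    then show "\<exists>f'. ((\<lambda>z. g z x) has_field_derivative f') (at z)"
      by (auto simp: has_field_derivative_iff)
  qed
qed

lemma dual_analytic_cmult:
  assumes c: "c holomorphic_on U" and U: "open U" and \<psi>: "\<psi> \<in> cdual"
  shows "dual_analytic_on (\<lambda>w x. c w * \<psi> x) U"
  unfolding dual_analytic_on_def
proof (intro conjI ballI)
  show "open U" by fact
  show "(\<lambda>x. c z * \<psi> x) \<in> cdual" for z by (rule cdual_cmult[OF \<psi>])
  fix z assume z: "z \<in> U"
  have d: "(c has_field_derivative deriv c z) (at z)"
    using c U z by (simp add: holomorphic_derivI)
  then have l: "((\<lambda>w. (c w - c z) / (w - z) - deriv c z) \<longlongrightarrow> 0) (at z)"
    by (simp add: has_field_derivative_iff LIM_zero_iff)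
  have e: "(\<lambda>x. (c w * \<psi> x - c z * \<psi> x) / (w - z) - deriv c z * \<psi> x)
      = (\<lambda>x. ((c w - c z) / (w - z) - deriv c z) * \<psi> x)" for w
    by (simp add: fun_eq_iff algebra_simps diff_divide_distrib)
  have "((\<lambda>w. dnorm (\<lambda>x. ((c w - c z) / (w - z) - deriv c z) * \<psi> x)) \<longlongrightarrow> 0) (at z)"
  proof (rule tendsto_sandwich[where f="\<lambda>w. 0" and h="\<lambda>w. cmod ((c w - c z) / (w - z) - deriv c z) * dnorm \<psi>"])
    show "\<forall>\<^sub>F w in at z. 0 \<le> dnorm (\<lambda>x. ((c w - c z) / (w - z) - deriv c z) * \<psi> x)"
      by (simp add: dnorm_nonneg cdual_cmult[OF \<psi>])
    show "\<forall>\<^sub>F w in at z. dnorm (\<lambda>x. ((c w - c z) / (w - z) - deriv c z) * \<psi> x)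
        \<le> cmod ((c w - c z) / (w - z) - deriv c z) * dnorm \<psi>"
      by (simp add: dnorm_cmult[OF \<psi>])
    show "((\<lambda>w. cmod ((c w - c z) / (w - z) - deriv c z) * dnorm \<psi>) \<longlongrightarrow> 0) (at z)"
      by (rule tendsto_mult_left_zero[OF tendsto_norm_zero[OF l]])
  qed simp
  then show "\<exists>G\<in>cdual. ((\<lambda>w. dnorm (\<lambda>x. (c w * \<psi> x - c z * \<psi> x) / (w - z) - G x)) \<longlongrightarrow> 0) (at z)"
    by (intro bexI[where x="\<lambda>x. deriv c z * \<psi> x"] cdual_cmult[OF \<psi>]) (unfold e)
qed

lemma dual_analytic_subset:
  "dual_analytic_on f U \<Longrightarrow> V \<subseteq> U \<Longrightarrow> open V \<Longrightarrow> dual_analytic_on f V"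
  unfolding dual_analytic_on_def by blast

lemma dual_analytic_cong:
  assumes f: "dual_analytic_on f U" and eq: "\<And>z. z \<in> U \<Longrightarrow> g z = f z"
  shows "dual_analytic_on g U"
  unfolding dual_analytic_on_def
proof (intro conjI ballI)
  have U: "open U" using f by (simp add: dual_analytic_on_def)
  show "open U" by fact
  show "g z \<in> cdual" if "z \<in> U" for z using eq[OF that] dual_analytic_in[OF f that] by simp
  fix z assume z: "z \<in> U"
  obtain G where G: "G \<in> cdual"
      and lim: "((\<lambda>w. dnorm (\<lambda>y. (f w y - f z y) / (w - z) - G y)) \<longlongrightarrow> 0) (at z)"
    using dual_analytic_onD[OF f z] by blast
  have "eventually (\<lambda>w. dnorm (\<lambda>y. (f w y - f z y) / (w - z) - G y)
                     = dnorm (\<lambda>y. (g w y - g z y) / (w - z) - G y)) (at z)"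
    by (rule eventually_mono[OF eventually_at_in_open'[OF U z]]) (simp add: eq z)
  then have "((\<lambda>w. dnorm (\<lambda>y. (g w y - g z y) / (w - z) - G y)) \<longlongrightarrow> 0) (at z)"
    by (rule Lim_transform_eventually[OF lim])
  with G show "\<exists>G\<in>cdual. ((\<lambda>w. dnorm (\<lambda>x. (g w x - g z x) / (w - z) - G x)) \<longlongrightarrow> 0) (at z)"
    by blast
qed

lemma dual_analytic_diff:
  assumes f: "dual_analytic_on f U" and g: "dual_analytic_on g U"
  shows "dual_analytic_on (\<lambda>w x. f w x - g w x) U"
  unfolding dual_analytic_on_def
proof (intro conjI ballI)
  have U: "open U" using f by (simp add: dual_analytic_on_def)
  show "open U" by fact
  show "(\<lambda>x. f z x - g z x) \<in> cdual" if "z \<in> U" for z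
    by (rule cdual_minus[OF dual_analytic_in[OF f that] dual_analytic_in[OF g that]])
  fix z assume z: "z \<in> U"
  obtain F where F: "F \<in> cdual"
      and limF: "((\<lambda>w. dnorm (\<lambda>y. (f w y - f z y) / (w - z) - F y)) \<longlongrightarrow> 0) (at z)"
    using dual_analytic_onD[OF f z] by blast
  obtain G where G: "G \<in> cdual"
      and limG: "((\<lambda>w. dnorm (\<lambda>y. (g w y - g z y) / (w - z) - G y)) \<longlongrightarrow> 0) (at z)"
    using dual_analytic_onD[OF g z] by blast
  have e: "(\<lambda>y. (f w y - g w y - (f z y - g z y)) / (w - z) - (F y - G y))
     = (\<lambda>y. ((f w y - f z y) / (w - z) - F y) - ((g w y - g z y) / (w - z) - G y))" for w
    by (rule ext) (simp add: divide_inverse algebra_simps)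
  have "((\<lambda>w. dnorm (\<lambda>y. ((f w y - f z y) / (w - z) - F y) - ((g w y - g z y) / (w - z) - G y))) \<longlongrightarrow> 0) (at z)"
  proof (rule tendsto_sandwich[where f="\<lambda>w. 0"
        and h="\<lambda>w. dnorm (\<lambda>y. (f w y - f z y) / (w - z) - F y) + dnorm (\<lambda>y. (g w y - g z y) / (w - z) - G y)"])
    have ev: "eventually (\<lambda>w. w \<in> U) (at z)" by (rule eventually_at_in_open'[OF U z])
    show "\<forall>\<^sub>F w in at z. 0 \<le> dnorm (\<lambda>y. ((f w y - f z y) / (w - z) - F y) - ((g w y - g z y) / (w - z) - G y))"
      by (rule eventually_mono[OF ev], rule dnorm_nonneg, rule cdual_minus)
        (auto intro!: cdual_quot F G dual_analytic_in[OF f] dual_analytic_in[OF g] z)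
    show "\<forall>\<^sub>F w in at z. dnorm (\<lambda>y. ((f w y - f z y) / (w - z) - F y) - ((g w y - g z y) / (w - z) - G y))
        \<le> dnorm (\<lambda>y. (f w y - f z y) / (w - z) - F y) + dnorm (\<lambda>y. (g w y - g z y) / (w - z) - G y)"
      by (rule eventually_mono[OF ev], rule dnorm_triangle_minus)
        (auto intro!: cdual_quot F G dual_analytic_in[OF f] dual_analytic_in[OF g] z)
    show "((\<lambda>w. dnorm (\<lambda>y. (f w y - f z y) / (w - z) - F y) + dnorm (\<lambda>y. (g w y - g z y) / (w - z) - G y)) \<longlongrightarrow> 0) (at z)"
      using tendsto_add[OF limF limG] by simp
  qed simp
  then show "\<exists>H\<in>cdual. ((\<lambda>w. dnorm (\<lambda>y. (f w y - g w y - (f z y - g z y)) / (w - z) - H y)) \<longlongrightarrow> 0) (at z)"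
    by (intro bexI[where x="\<lambda>x. F x - G x"] cdual_minus[OF F G]) (unfold e)
qed

lemma dual_analytic_dnorm_cont:
  assumes f: "dual_analytic_on f U" and z: "z \<in> U"
  shows "((\<lambda>w. dnorm (\<lambda>y. f w y - f z y)) \<longlongrightarrow> 0) (at z)"
proof -
  have U: "open U" using f by (simp add: dual_analytic_on_def)
  obtain G where G: "G \<in> cdual"
      and lim: "((\<lambda>w. dnorm (\<lambda>y. (f w y - f z y) / (w - z) - G y)) \<longlongrightarrow> 0) (at z)"
    using dual_analytic_onD[OF f z] by blast
  have ev: "eventually (\<lambda>w. w \<in> U - {z}) (at z)" by (rule eventually_at_in_open[OF U z])
  show ?thesis
  proof (rule tendsto_sandwich[where f="\<lambda>w. 0"
        and h="\<lambda>w. cmod (w - z) * (dnorm (\<lambda>y. (f w y - f z y) / (w - z) - G y) + dnorm G)"])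
    show "\<forall>\<^sub>F w in at z. 0 \<le> dnorm (\<lambda>y. f w y - f z y)"
      by (rule eventually_mono[OF ev]) (auto intro!: dnorm_nonneg cdual_minus dual_analytic_in[OF f] z)
    show "\<forall>\<^sub>F w in at z. dnorm (\<lambda>y. f w y - f z y)
        \<le> cmod (w - z) * (dnorm (\<lambda>y. (f w y - f z y) / (w - z) - G y) + dnorm G)"
    proof (rule eventually_mono[OF ev])
      fix w assume w: "w \<in> U - {z}"
      have q: "(\<lambda>y. (f w y - f z y) / (w - z) - G y) \<in> cdual"
        using w z by (auto intro!: cdual_quot G dual_analytic_in[OF f])
      have "(\<lambda>y. f w y - f z y) = (\<lambda>y. (w - z) * ((\<lambda>y. (\<lambda>y. (f w y - f z y) / (w - z) - G y) y + G y) y))"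
        using w by (auto simp: fun_eq_iff)
      then have "dnorm (\<lambda>y. f w y - f z y) = dnorm (\<lambda>y. (w - z) * ((\<lambda>y. (\<lambda>y. (f w y - f z y) / (w - z) - G y) y + G y) y))"
        by simp
      also have "\<dots> \<le> cmod (w - z) * dnorm (\<lambda>y. (\<lambda>y. (f w y - f z y) / (w - z) - G y) y + G y)"
        by (rule dnorm_cmult[OF cdual_plus[OF q G]])
      also have "\<dots> \<le> cmod (w - z) * (dnorm (\<lambda>y. (f w y - f z y) / (w - z) - G y) + dnorm G)"
        by (rule mult_left_mono[OF dnorm_triangle[OF q G] norm_ge_zero])
      finally show "dnorm (\<lambda>y. f w y - f z y)
        \<le> cmod (w - z) * (dnorm (\<lambda>y. (f w y - f z y) / (w - z) - G y) + dnorm G)" .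
    qed
    have "((\<lambda>w. cmod (w - z)) \<longlongrightarrow> 0) (at z)"
      by (intro tendsto_norm_zero LIM_zero tendsto_ident_at)
    then show "((\<lambda>w. cmod (w - z) * (dnorm (\<lambda>y. (f w y - f z y) / (w - z) - G y) + dnorm G)) \<longlongrightarrow> 0) (at z)"
      using tendsto_mult[OF _ tendsto_add[OF lim tendsto_const]] by fastforce
  qed simp
qed

lemma dual_analytic_dnorm_continuous_on:
  assumes f: "dual_analytic_on f U"
  shows "continuous_on U (\<lambda>z. dnorm (f z))"
proof -
  have U: "open U" using f by (simp add: dual_analytic_on_def)
  show ?thesis unfolding continuous_on_eq_continuous_at[OF U] continuous_at
  proof
    fix z assume z: "z \<in> U"
    have ev: "eventually (\<lambda>w. w \<in> U) (at z)" by (rule eventually_at_in_open'[OF U z])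
    have "((\<lambda>w. dnorm (f w) - dnorm (f z)) \<longlongrightarrow> 0) (at z)"
    proof (rule Lim_null_comparison[OF _ dual_analytic_dnorm_cont[OF f z]])
      show "\<forall>\<^sub>F w in at z. norm (dnorm (f w) - dnorm (f z)) \<le> dnorm (\<lambda>y. f w y - f z y)"
      proof (rule eventually_mono[OF ev])
        fix w assume w: "w \<in> U"
        have fw: "f w \<in> cdual" and fz: "f z \<in> cdual" using dual_analytic_in[OF f] w z by auto
        have d: "(\<lambda>y. f w y - f z y) \<in> cdual" by (rule cdual_minus[OF fw fz])
        have "dnorm (f w) = dnorm (\<lambda>y. (\<lambda>y. f w y - f z y) y + f z y)" by simp
        also have "\<dots> \<le> dnorm (\<lambda>y. f w y - f z y) + dnorm (f z)" by (rule dnorm_triangle[OF d fz])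
        finally have 1: "dnorm (f w) \<le> dnorm (\<lambda>y. f w y - f z y) + dnorm (f z)" .
        have "dnorm (f z) = dnorm (\<lambda>y. (\<lambda>y. f z y - f w y) y + f w y)" by simp
        also have "\<dots> \<le> dnorm (\<lambda>y. f z y - f w y) + dnorm (f w)"
          by (rule dnorm_triangle[OF cdual_minus[OF fz fw] fw])
        finally have 2: "dnorm (f z) \<le> dnorm (\<lambda>y. f z y - f w y) + dnorm (f w)" .
        show "norm (dnorm (f w) - dnorm (f z)) \<le> dnorm (\<lambda>y. f w y - f z y)"
          using 1 2 dnorm_minus_commute[of "f z" "f w"] by simp
      qed
    qed
    then show "((\<lambda>w. dnorm (f w)) \<longlongrightarrow> dnorm (f z)) (at z)" by (simp add: LIM_zero_iff)
  qed
qed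


section \<open>Resolvent of T gives resolvent of T*\<close>

lemma adj_spectrum_subset:
  assumes T: "bounded_clinear_op T"
  shows "adj_spectrum T \<subseteq> op_spectrum T"
proof
  fix z assume zs: "z \<in> adj_spectrum T"
  show "z \<in> op_spectrum T"
  proof (rule ccontr)
    assume "z \<notin> op_spectrum T"
    then obtain S where S: "bounded_linear S" and S1: "\<And>x. S (T x - scaleC z x) = x"
      and S2: "\<And>x. T (S x) - scaleC z (S x) = x"
      by (auto simp: op_spectrum_def)
    have Sadd: "S (x + y) = S x + S y" for x y
      using S linear_add bounded_linear.linear by blast
    have Sdiff: "S (x - y) = S x - S y" for x y
      using S linear_diff bounded_linear.linear by blast
    have SC: "S (scaleC c x) = scaleC c (S x)" for c x
    proof -
      have "scaleC c x = T (scaleC c (S x)) - scaleC z (scaleC c (S x))"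
        using S2[of x] by (metis scaleC_diff_right bcop_scaleC[OF T] scaleC_comm)
      then show ?thesis using S1 by metis
    qed
    define S' where "S' \<phi> = (\<lambda>x. \<phi> (S x))" for \<phi> :: "'a \<Rightarrow> complex"
    have inc: "S' \<phi> \<in> cdual" if \<phi>: "\<phi> \<in> cdual" for \<phi>
      unfolding S'_def
    proof (rule cdualI[where K="dnorm \<phi> * onorm S"])
      show "\<phi> (S (x + y)) = \<phi> (S x) + \<phi> (S y)" for x y by (simp add: Sadd cdual_add[OF \<phi>])
      show "\<phi> (S (scaleC c x)) = c * \<phi> (S x)" for c x by (simp add: SC cdualD_scaleC[OF \<phi>])
      show "cmod (\<phi> (S x)) \<le> dnorm \<phi> * onorm S * norm x" for x
      proof -
        have "cmod (\<phi> (S x)) \<le> dnorm \<phi> * norm (S x)" by (rule cdual_eval[OF \<phi>])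
        also have "\<dots> \<le> dnorm \<phi> * (onorm S * norm x)"
          by (rule mult_left_mono[OF onorm[OF S] dnorm_nonneg[OF \<phi>]])
        finally show ?thesis by (simp add: mult.assoc)
      qed
    qed
    have bnd: "dnorm (S' \<phi>) \<le> onorm S * dnorm \<phi>" if \<phi>: "\<phi> \<in> cdual" for \<phi>
      unfolding S'_def
    proof (rule dnorm_le)
      show "0 \<le> onorm S * dnorm \<phi>" by (simp add: onorm_pos_le[OF S] dnorm_nonneg[OF \<phi>])
      show "cmod (\<phi> (S x)) \<le> onorm S * dnorm \<phi> * norm x" for x
      proof -
        have "cmod (\<phi> (S x)) \<le> dnorm \<phi> * norm (S x)" by (rule cdual_eval[OF \<phi>])
        also have "\<dots> \<le> dnorm \<phi> * (onorm S * norm x)"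
          by (rule mult_left_mono[OF onorm[OF S] dnorm_nonneg[OF \<phi>]])
        finally show ?thesis by (simp add: algebra_simps)
      qed
    qed
    have l: "S' (dshift (adj T) z \<phi>) = \<phi>" if \<phi>: "\<phi> \<in> cdual" for \<phi>
    proof
      fix x
      have "S' (dshift (adj T) z \<phi>) x = \<phi> (T (S x)) - z * \<phi> (S x)"
        by (simp add: S'_def dshift_apply)
      also have "\<dots> = \<phi> (T (S x) - scaleC z (S x))"
        by (simp add: cdual_diff[OF \<phi>] cdualD_scaleC[OF \<phi>])
      finally show "S' (dshift (adj T) z \<phi>) x = \<phi> x" by (simp add: S2)
    qed
    have r: "dshift (adj T) z (S' \<phi>) = \<phi>" if \<phi>: "\<phi> \<in> cdual" for \<phi>
    proof
      fix x
      have "dshift (adj T) z (S' \<phi>) x = \<phi> (S (T x)) - z * \<phi> (S x)"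
        by (simp add: S'_def dshift_apply)
      also have "\<dots> = \<phi> (S (T x - scaleC z x))"
        by (simp add: cdual_diff[OF \<phi>] cdualD_scaleC[OF \<phi>] Sdiff SC)
      finally show "dshift (adj T) z (S' \<phi>) x = \<phi> x" by (simp add: S1)
    qed
    have "\<exists>S. (\<forall>\<phi>\<in>cdual. S \<phi> \<in> cdual) \<and>
       (\<exists>K. \<forall>\<phi>\<in>cdual. dnorm (S \<phi>) \<le> K * dnorm \<phi>) \<and>
       (\<forall>\<phi>\<in>cdual. S (dshift (adj T) z \<phi>) = \<phi>) \<and> (\<forall>\<phi>\<in>cdual. dshift (adj T) z (S \<phi>) = \<phi>)"
      using inc bnd l r by blast
    then have "z \<notin> dspectrum_on cdual (adj T)" unfolding dspectrum_on_def by simp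
    then show False using zs by (simp add: adj_spectrum_def)
  qed
qed

lemma eigen_in_spectrum:
  assumes T: "bounded_clinear_op T" and \<psi>: "\<psi> \<in> cdual"
    and e: "dshift (adj T) z \<psi> = (\<lambda>x. 0)" and nz: "\<psi> \<noteq> (\<lambda>x. 0)"
  shows "z \<in> op_spectrum T"
proof (rule ccontr)
  assume "z \<notin> op_spectrum T"
  then obtain S where S2: "\<And>x. T (S x) - scaleC z (S x) = x"
    by (auto simp: op_spectrum_def)
  have "\<psi> x = 0" for x
  proof -
    have "\<psi> x = \<psi> (T (S x) - scaleC z (S x))" by (simp add: S2)
    also have "\<dots> = dshift (adj T) z \<psi> (S x)"
      by (simp add: dshift_apply cdual_diff[OF \<psi>] cdualD_scaleC[OF \<psi>])
    finally show ?thesis by (simp add: e)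
  qed
  then show False using nz by auto
qed

lemma eigen_in_adj_spectrum:
  assumes \<psi>: "\<psi> \<in> cdual"
    and e: "dshift (adj T) z \<psi> = (\<lambda>x. 0)" and nz: "\<psi> \<noteq> (\<lambda>x. 0)"
  shows "z \<in> adj_spectrum T"
proof (rule ccontr)
  assume "z \<notin> adj_spectrum T"
  then obtain S where "\<forall>\<phi>\<in>cdual. S (dshift (adj T) z \<phi>) = \<phi>"
    by (auto simp: adj_spectrum_def dspectrum_on_def)
  then have "S (dshift (adj T) z \<psi>) = \<psi>" "S (dshift (adj T) z (\<lambda>x. 0)) = (\<lambda>x. 0)"
    using \<psi> by auto
  moreover have "dshift (adj T) z (\<lambda>x. 0) = (\<lambda>x. 0)" by (simp add: dshift_def adj_def)
  ultimately show False using e nz by simp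
qed

section \<open>Decay at infinity\<close>

lemma shift_solution_bound:
  assumes T: "bounded_clinear_op T" and eq: "T y - scaleC z y = x" and K: "onorm T < cmod z"
  shows "norm y \<le> norm x / (cmod z - onorm T)"
proof -
  have "(cmod z - onorm T) * norm y \<le> norm x" using shift_lower[OF T, of z y] eq by simp
  then show ?thesis using K by (simp add: field_simps)
qed

lemma at_infinity_decay:
  fixes h :: "complex \<Rightarrow> complex"
  assumes b: "\<And>z. Bb \<le> cmod z \<Longrightarrow> cmod (h z) \<le> C / (cmod z - K)" and KB: "K < Bb" and C: "0 \<le> C"
  shows "(h \<longlongrightarrow> 0) at_infinity"
  unfolding Lim_at_infinity
proof (intro allI impI)
  fix e :: real assume e: "0 < e"
  show "\<exists>b. \<forall>x. b \<le> norm x \<longrightarrow> dist (h x) 0 < e"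
  proof (intro exI allI impI)
    fix z :: complex assume z: "max Bb (K + C / e + 1) \<le> norm z"
    have pos: "0 < cmod z - K" using z KB by linarith
    have "C / e < cmod z - K" using z by linarith
    then have "C < (cmod z - K) * e" using e by (simp add: pos_divide_less_eq)
    then have "C / (cmod z - K) < e" using pos by (simp add: pos_divide_less_eq mult.commute)
    moreover have "cmod (h z) \<le> C / (cmod z - K)" using b z by simp
    ultimately show "dist (h z) 0 < e" by simp
  qed
qed

lemma glocal_annihilate:
  fixes T :: "'a::complex_banach \<Rightarrow> 'a"
  assumes T: "bounded_clinear_op T"
    and dense: "\<And>U. U \<noteq> {} \<Longrightarrow> openin (top_of_set (op_spectrum T)) U \<Longrightarrow>
                  closure (glocal_subspace T (closure U)) = UNIV"
    and F: "closed F" and lam: "\<mu> \<in> op_spectrum T" "\<mu> \<notin> F"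
    and phi: "\<phi> \<in> adj_glocal_subspace T F"
  shows "\<phi> = (\<lambda>x. 0)"
proof -
  obtain g where \<phi>: "\<phi> \<in> cdual" and g: "dual_analytic_on g (- F)"
    and geq: "\<And>z. z \<in> - F \<Longrightarrow> dshift (adj T) z (g z) = \<phi>"
    using phi by (auto simp: adj_glocal_subspace_def)
  have oF: "open (- F)" using F by auto
  obtain e where e: "e > 0" "ball \<mu> e \<subseteq> - F" using oF lam(2) open_contains_ball by blast
  define r where "r = e / 2"
  have r: "r > 0" using e by (simp add: r_def)
  define U where "U = op_spectrum T \<inter> ball \<mu> r"
  have Uo: "openin (top_of_set (op_spectrum T)) U" unfolding U_def by auto
  have Une: "U \<noteq> {}" using lam(1) r by (auto simp: U_def)
  have clU: "closure U \<subseteq> cball \<mu> r"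
    by (rule closure_minimal) (auto simp: U_def)
  have cF: "cball \<mu> r \<subseteq> - F" using e(2) r e(1) by (auto simp: r_def subset_eq)
  define D where "D = glocal_subspace T (closure U)"
  have Dd: "closure D = UNIV" unfolding D_def by (rule dense[OF Une Uo])
  have vanish: "g z x = 0" if x: "x \<in> D" and z: "z \<in> - F" for x z
  proof -
    obtain f where f: "X_analytic_on f (- closure U)"
      and feq: "\<And>z. z \<in> - closure U \<Longrightarrow> T (f z) - scaleC z (f z) = x"
      using x by (auto simp: D_def glocal_subspace_def)
    have overlap: "g w x = \<phi> (f w)" if w: "w \<notin> closure U" "w \<in> - F" for w
    proof -
      have gw: "g w \<in> cdual" by (rule dual_analytic_in[OF g w(2)])
      have "g w x = g w (T (f w) - scaleC w (f w))" using feq w by simp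
      also have "\<dots> = dshift (adj T) w (g w) (f w)"
        by (simp add: dshift_apply cdual_diff[OF gw] cdualD_scaleC[OF gw])
      finally show ?thesis using geq[OF w(2)] by simp
    qed
    define h where "h w = (if w \<in> closure U then g w x else \<phi> (f w))" for w
    have onF: "h w = g w x" if "w \<in> - F" for w
      using overlap that by (auto simp: h_def)
    have hol1: "(\<lambda>w. \<phi> (f w)) holomorphic_on (- closure U)" by (rule X_analytic_holo[OF f \<phi>])
    have hol2: "(\<lambda>w. g w x) holomorphic_on (- F)" by (rule dual_analytic_holo[OF g])
    have hh: "h holomorphic_on UNIV"
      unfolding holomorphic_on_open[OF open_UNIV]
    proof
      fix w :: complex
      show "\<exists>f'. (h has_field_derivative f') (at w)"
      proof (cases "w \<in> closure U")
        case False
        have "((\<lambda>w. \<phi> (f w)) has_field_derivative deriv (\<lambda>w. \<phi> (f w)) w) (at w)"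
          using hol1 False by (intro holomorphic_derivI) auto
        then have "(h has_field_derivative deriv (\<lambda>w. \<phi> (f w)) w) (at w)"
          by (rule has_field_derivative_transform_within_open[where S="- closure U"])
             (use False in \<open>auto simp: h_def\<close>)
        then show ?thesis ..
      next
        case True
        then have wF: "w \<in> - F" using clU cF by auto
        have "((\<lambda>w. g w x) has_field_derivative deriv (\<lambda>w. g w x) w) (at w)"
          using hol2 wF oF by (intro holomorphic_derivI) auto
        then have "(h has_field_derivative deriv (\<lambda>w. g w x) w) (at w)"
          by (rule has_field_derivative_transform_within_open[where S="- F"])
             (use wF oF onF in auto)
        then show ?thesis ..
      qed
    qed
    have lim: "(h \<longlongrightarrow> 0) at_infinity"
    proof (rule at_infinity_decay[where Bb="cmod \<mu> + r + onorm T + 1" and K="onorm T"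
          and C="dnorm \<phi> * norm x"])
      fix w :: complex assume w: "cmod \<mu> + r + onorm T + 1 \<le> cmod w"
      have "w \<notin> cball \<mu> r"
      proof
        assume "w \<in> cball \<mu> r"
        then have "cmod (\<mu> - w) \<le> r" by (simp add: dist_norm)
        moreover have "cmod w \<le> cmod \<mu> + cmod (\<mu> - w)" using norm_triangle_ineq4[of \<mu> "\<mu> - w"] by simp
        ultimately show False using w bcop_onorm_nonneg[OF T] by linarith
      qed
      then have wU: "w \<notin> closure U" using clU by auto
      have K: "onorm T < cmod w" using w r norm_ge_zero[of \<mu>] by linarith
      have "cmod (h w) = cmod (\<phi> (f w))" using wU by (simp add: h_def)
      also have "\<dots> \<le> dnorm \<phi> * norm (f w)" by (rule cdual_eval[OF \<phi>])
      also have "\<dots> \<le> dnorm \<phi> * (norm x / (cmod w - onorm T))"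
        by (rule mult_left_mono[OF shift_solution_bound[OF T feq K] dnorm_nonneg[OF \<phi>]])
           (use wU in simp)
      finally show "cmod (h w) \<le> dnorm \<phi> * norm x / (cmod w - onorm T)" by simp
    next
      show "onorm T < cmod \<mu> + r + onorm T + 1" using r norm_ge_zero[of \<mu>] by linarith
      show "0 \<le> dnorm \<phi> * norm x" by (simp add: dnorm_nonneg[OF \<phi>])
    qed
    have "h z = 0" by (rule Liouville_weak[OF hh lim])
    then show ?thesis using onF[OF z] by simp
  qed
  have gz: "g z = (\<lambda>x. 0)" if z: "z \<in> - F" for z
  proof -
    have gc: "g z \<in> cdual" by (rule dual_analytic_in[OF g z])
    have "closed {x. g z x = (\<lambda>x. 0) x}"
      by (rule closed_Collect_eq) (auto intro: linear_continuous_on cdualD_bl[OF gc])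
    moreover have "D \<subseteq> {x. g z x = (\<lambda>x. 0) x}" using vanish z by auto
    ultimately have "closure D \<subseteq> {x. g z x = (\<lambda>x. 0) x}" by (rule closure_minimal[rotated])
    then show ?thesis using Dd by auto
  qed
  have "\<phi> = dshift (adj T) \<mu> (g \<mu>)" using geq lam(2) by simp
  also have "\<dots> = (\<lambda>x. 0)" using gz[of \<mu>] lam(2) by (simp add: dshift_def adj_def)
  finally show ?thesis .
qed


definition dense_hyp :: "('a::complex_banach \<Rightarrow> 'a) \<Rightarrow> bool" where
  "dense_hyp T \<longleftrightarrow> (\<forall>U. U \<noteq> {} \<longrightarrow> openin (top_of_set (op_spectrum T)) U \<longrightarrow>
                  closure (glocal_subspace T (closure U)) = UNIV)"

lemma annihilate:
  assumes T: "bounded_clinear_op T" and D: "dense_hyp T"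
    and F: "closed F" and lam: "\<mu> \<in> op_spectrum T" "\<mu> \<notin> F"
    and phi: "\<phi> \<in> adj_glocal_subspace T F"
  shows "\<phi> = (\<lambda>x. 0)"
  by (rule glocal_annihilate[OF T _ F lam phi]) (use D in \<open>auto simp: dense_hyp_def\<close>)

lemma dshift_zero [simp]: "dshift (adj T) z (\<lambda>x. 0) = (\<lambda>x. 0)"
  by (simp add: dshift_def adj_def)

lemma dual_analytic_zero: "open U \<Longrightarrow> dual_analytic_on (\<lambda>w x. 0) U"
  using dual_analytic_cmult[of "\<lambda>w. 0" U "\<lambda>x. 0"] by simp

lemma zero_in_adj_glocal: "closed F \<Longrightarrow> (\<lambda>x. 0) \<in> adj_glocal_subspace T F"
  unfolding adj_glocal_subspace_def
  by (auto intro!: exI[where x="\<lambda>w x. 0"] dual_analytic_zero)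

lemma eigen_glocal:
  assumes T: "bounded_clinear_op T" and \<psi>: "\<psi> \<in> cdual" and e: "dshift (adj T) z \<psi> = (\<lambda>x. 0)"
  shows "\<psi> \<in> adj_glocal_subspace T {z}"
  unfolding adj_glocal_subspace_def
proof (intro CollectI conjI exI ballI)
  show "\<psi> \<in> cdual" by fact
  have c: "(\<lambda>w. 1 / (z - w)) holomorphic_on (- {z})"
    by (intro holomorphic_intros) auto
  show "dual_analytic_on (\<lambda>w x. 1 / (z - w) * \<psi> x) (- {z})"
    by (rule dual_analytic_cmult[OF c _ \<psi>]) auto
  fix w assume w: "w \<in> - {z}"
  have Tx: "\<psi> (T x) = z * \<psi> x" for x
    using fun_cong[OF e, of x] by (simp add: dshift_apply)
  show "dshift (adj T) w ((\<lambda>w x. 1 / (z - w) * \<psi> x) w) = \<psi>"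
  proof
    fix x
    have nz: "z - w \<noteq> 0" using w by auto
    have "dshift (adj T) w ((\<lambda>w x. 1 / (z - w) * \<psi> x) w) x = inverse (z - w) * ((z - w) * \<psi> x)"
      by (simp add: dshift_apply Tx algebra_simps divide_inverse)
    also have "\<dots> = \<psi> x" using nz by (simp add: field_simps)
    finally show "dshift (adj T) w ((\<lambda>w x. 1 / (z - w) * \<psi> x) w) x = \<psi> x" .
  qed
qed

lemma svep:
  assumes T: "bounded_clinear_op T" and D: "dense_hyp T"
    and g: "dual_analytic_on g W" and e: "\<And>z. z \<in> W \<Longrightarrow> dshift (adj T) z (g z) = (\<lambda>x. 0)"
    and z0: "z0 \<in> W"
  shows "g z0 = (\<lambda>x. 0)"
proof (rule ccontr)
  assume nz: "g z0 \<noteq> (\<lambda>x. 0)"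
  then obtain x where x: "g z0 x \<noteq> 0" by auto
  have W: "open W" using g by (simp add: dual_analytic_on_def)
  have "continuous_on W (\<lambda>w. g w x)"
    by (rule holomorphic_on_imp_continuous_on[OF dual_analytic_holo[OF g]])
  then have "((\<lambda>w. g w x) \<longlongrightarrow> g z0 x) (at z0)"
    using W z0 by (simp add: continuous_on_eq_continuous_at continuous_at)
  then have ev1: "eventually (\<lambda>w. g w x \<noteq> 0) (at z0)"
    by (rule tendsto_imp_eventually_ne[OF _ x])
  have ev2: "eventually (\<lambda>w. w \<in> W - {z0}) (at z0)" by (rule eventually_at_in_open[OF W z0])
  obtain z1 where z1: "g z1 x \<noteq> 0" "z1 \<in> W" "z1 \<noteq> z0"
    using eventually_happens'[OF at_neq_bot eventually_conj[OF ev1 ev2]] by auto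
  have "g z1 \<noteq> (\<lambda>x. 0)" using z1 by auto
  then have s1: "z1 \<in> op_spectrum T"
    by (rule eigen_in_spectrum[OF T dual_analytic_in[OF g z1(2)] e[OF z1(2)]])
  have gl: "g z0 \<in> adj_glocal_subspace T {z0}"
    by (rule eigen_glocal[OF T dual_analytic_in[OF g z0] e[OF z0]])
  have "g z0 = (\<lambda>x. 0)"
    using annihilate[OF T D closed_singleton s1 _ gl] z1 by simp
  then show False using nz by simp
qed

definition loc_sol :: "('a::complex_banach \<Rightarrow> 'a) \<Rightarrow> ('a \<Rightarrow> complex) \<Rightarrow> complex set \<Rightarrow> (complex \<Rightarrow> 'a \<Rightarrow> complex) \<Rightarrow> bool" where
  "loc_sol T \<phi> U f \<longleftrightarrow> dual_analytic_on f U \<and> (\<forall>z\<in>U. dshift (adj T) z (f z) = \<phi>)"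

lemma loc_sol_agree:
  assumes T: "bounded_clinear_op T" and D: "dense_hyp T"
    and f: "loc_sol T \<phi> U f" and f': "loc_sol T \<phi> U' f'" and z: "z \<in> U" "z \<in> U'"
  shows "f z = f' z"
proof -
  have fa: "dual_analytic_on f U" and fa': "dual_analytic_on f' U'"
    using f f' by (auto simp: loc_sol_def)
  have o: "open (U \<inter> U')" using fa fa' by (auto simp: dual_analytic_on_def)
  have d: "dual_analytic_on (\<lambda>w x. f w x - f' w x) (U \<inter> U')"
    by (rule dual_analytic_diff; rule dual_analytic_subset[OF _ _ o]) (use fa fa' in auto)
  have "(\<lambda>x. f z x - f' z x) = (\<lambda>x. 0)"
  proof (rule svep[OF T D d _, of z])
    fix w assume w: "w \<in> U \<inter> U'"
    have e1: "dshift (adj T) w (f w) = \<phi>" and e2: "dshift (adj T) w (f' w) = \<phi>"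
      using f f' w by (auto simp: loc_sol_def)
    show "dshift (adj T) w (\<lambda>x. f w x - f' w x) = (\<lambda>x. 0)"
    proof
      fix x
      have "dshift (adj T) w (f w) x - dshift (adj T) w (f' w) x = 0" using e1 e2 by simp
      then show "dshift (adj T) w (\<lambda>x. f w x - f' w x) x = (\<lambda>x. 0) x"
        by (simp add: dshift_apply algebra_simps)
    qed
  qed (use z in auto)
  then show ?thesis by (auto simp: fun_eq_iff dest: fun_cong)
qed

lemma local_resolvent_eq: "adj_local_resolvent T \<phi> = \<Union>{U. \<exists>f. loc_sol T \<phi> U f}"
  by (simp add: adj_local_resolvent_def loc_sol_def)

lemma open_local_resolvent: "open (adj_local_resolvent T \<phi>)"
  unfolding adj_local_resolvent_def by (auto intro!: open_Union dest: dual_analytic_open)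

lemma closed_local_spectrum: "closed (adj_local_spectrum T \<phi>)"
  unfolding adj_local_spectrum_def by (rule closed_Compl[OF open_local_resolvent])

lemma local_resolventI: "loc_sol T \<phi> U f \<Longrightarrow> U \<subseteq> adj_local_resolvent T \<phi>"
  unfolding local_resolvent_eq by blast

lemma glue:
  assumes T: "bounded_clinear_op T" and D: "dense_hyp T" and \<phi>: "\<phi> \<in> cdual"
  shows "\<phi> \<in> adj_glocal_subspace T (adj_local_spectrum T \<phi>)"
proof -
  define R where "R = adj_local_resolvent T \<phi>"
  define G where "G z = (SOME v. \<exists>U f. loc_sol T \<phi> U f \<and> z \<in> U \<and> v = f z)" for z
  have Gf: "G z = f z" if f: "loc_sol T \<phi> U f" and z: "z \<in> U" for U f z
  proof -
    have "\<exists>v. \<exists>U f. loc_sol T \<phi> U f \<and> z \<in> U \<and> v = f z" using f z by blast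
    then have "\<exists>U' f'. loc_sol T \<phi> U' f' \<and> z \<in> U' \<and> G z = f' z"
      unfolding G_def by (rule someI_ex)
    then obtain U' f' where "loc_sol T \<phi> U' f'" "z \<in> U'" "G z = f' z" by blast
    then show ?thesis using loc_sol_agree[OF T D f, of U' f' z] z by simp
  qed
  have oR: "open R" unfolding R_def by (rule open_local_resolvent)
  have an: "dual_analytic_on G R"
    unfolding dual_analytic_on_def
  proof (intro conjI ballI)
    show "open R" by fact
    fix z assume z: "z \<in> R"
    then obtain U f where f: "loc_sol T \<phi> U f" and zU: "z \<in> U"
      unfolding R_def local_resolvent_eq by blast
    have "dual_analytic_on G U"
      by (rule dual_analytic_cong[where f=f]) (use f Gf in \<open>auto simp: loc_sol_def\<close>)
    then show "G z \<in> cdual"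
      and "\<exists>g\<in>cdual. ((\<lambda>w. dnorm (\<lambda>x. (G w x - G z x) / (w - z) - g x)) \<longlongrightarrow> 0) (at z)"
      using zU by (auto simp: dual_analytic_on_def)
  qed
  have eq: "dshift (adj T) z (G z) = \<phi>" if z: "z \<in> R" for z
  proof -
    obtain U f where f: "loc_sol T \<phi> U f" and zU: "z \<in> U"
      using z unfolding R_def local_resolvent_eq by blast
    then show ?thesis using Gf[OF f zU] by (simp add: loc_sol_def)
  qed
  have "- adj_local_spectrum T \<phi> = R" by (simp add: adj_local_spectrum_def R_def)
  then show ?thesis
    unfolding adj_glocal_subspace_def using \<phi> an eq by auto
qed

lemma local_spectrum_zero: "adj_local_spectrum T (\<lambda>x. 0) = {}"
proof -
  have "loc_sol T (\<lambda>x. 0) UNIV (\<lambda>w x. 0)"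
    by (simp add: loc_sol_def dual_analytic_zero)
  then have "UNIV \<subseteq> adj_local_resolvent T (\<lambda>x. 0)" by (rule local_resolventI)
  then show ?thesis by (auto simp: adj_local_spectrum_def)
qed

lemma adj_spectrum_subset_local:
  assumes T: "bounded_clinear_op T" and D: "dense_hyp T" and \<phi>: "\<phi> \<in> cdual" and nz: "\<phi> \<noteq> (\<lambda>x. 0)"
  shows "adj_spectrum T \<subseteq> adj_local_spectrum T \<phi>"
proof
  fix \<mu> assume mu: "\<mu> \<in> adj_spectrum T"
  show "\<mu> \<in> adj_local_spectrum T \<phi>"
  proof (rule ccontr)
    assume "\<mu> \<notin> adj_local_spectrum T \<phi>"
    moreover have "\<mu> \<in> op_spectrum T" using adj_spectrum_subset[OF T] mu by auto
    ultimately have "\<phi> = (\<lambda>x. 0)"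
      using annihilate[OF T D closed_local_spectrum _ _ glue[OF T D \<phi>]] by blast
    then show False using nz by simp
  qed
qed

lemma claim1:
  assumes T: "bounded_clinear_op T" and D: "dense_hyp T"
  shows "\<forall>F. closed F \<and> F \<subset> adj_spectrum T \<longrightarrow> adj_glocal_subspace T F = {\<lambda>x. 0}"
proof (intro allI impI)
  fix F assume F: "closed F \<and> F \<subset> adj_spectrum T"
  then obtain \<mu> where mu: "\<mu> \<in> adj_spectrum T" "\<mu> \<notin> F" by blast
  have mu': "\<mu> \<in> op_spectrum T" using adj_spectrum_subset[OF T] mu by auto
  show "adj_glocal_subspace T F = {\<lambda>x. 0}"
  proof
    show "adj_glocal_subspace T F \<subseteq> {\<lambda>x. 0}"
      using annihilate[OF T D _ mu' mu(2)] F by blast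
    show "{\<lambda>x. 0} \<subseteq> adj_glocal_subspace T F" using zero_in_adj_glocal F by blast
  qed
qed

lemma claim_i:
  assumes T: "bounded_clinear_op T" and D: "dense_hyp T"
  shows "\<not> (\<exists>z. adj_spectrum T = {z}) \<longrightarrow> adj_point_spectrum T = {}"
proof (intro impI)
  assume ns: "\<not> (\<exists>z. adj_spectrum T = {z})"
  show "adj_point_spectrum T = {}"
  proof (rule ccontr)
    assume "adj_point_spectrum T \<noteq> {}"
    then obtain z \<psi> where \<psi>: "\<psi> \<in> cdual" "\<psi> \<noteq> (\<lambda>x. 0)" "dshift (adj T) z \<psi> = (\<lambda>x. 0)"
      by (auto simp: adj_point_spectrum_def)
    have zs: "z \<in> adj_spectrum T" by (rule eigen_in_adj_spectrum[OF \<psi>(1,3,2)])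
    then obtain \<mu> where mu: "\<mu> \<in> adj_spectrum T" "\<mu> \<noteq> z" using ns by blast
    have mu': "\<mu> \<in> op_spectrum T" using adj_spectrum_subset[OF T] mu by auto
    have "\<psi> = (\<lambda>x. 0)"
      by (rule annihilate[OF T D closed_singleton mu' _ eigen_glocal[OF T \<psi>(1,3)]]) (use mu in simp)
    then show False using \<psi> by simp
  qed
qed


lemma series_bound:
  fixes f :: "nat \<Rightarrow> complex"
  assumes b: "\<And>n. cmod (f n) \<le> q ^ n * c" and q: "0 \<le> q" "q < 1"
  shows "summable f" "cmod (suminf f) \<le> c / (1 - q)"
proof -
  have g: "summable (\<lambda>n. q ^ n * c)"
    by (rule summable_mult2[OF summable_geometric]) (use q in simp)
  show sf: "summable f"
    by (rule summable_comparison_test[OF _ g]) (use b in auto)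
  have sn: "summable (\<lambda>n. norm (f n))"
    by (rule summable_comparison_test[OF _ g]) (use b in auto)
  have "cmod (suminf f) \<le> (\<Sum>n. norm (f n))" by (rule summable_norm[OF sn])
  also have "\<dots> \<le> (\<Sum>n. q ^ n * c)" by (rule suminf_le[OF b sn g])
  also have "\<dots> = (\<Sum>n. q ^ n) * c" by (rule suminf_mult2[OF summable_geometric, symmetric]) (use q in simp)
  also have "\<dots> = c / (1 - q)" using q by (simp add: suminf_geometric)
  finally show "cmod (suminf f) \<le> c / (1 - q)" .
qed

lemma series_tail_bound:
  fixes f :: "nat \<Rightarrow> complex"
  assumes b: "\<And>n. cmod (f n) \<le> q ^ n * c" and q: "0 \<le> q" "q < 1"
  shows "cmod (suminf f - (\<Sum>i<m. f i)) \<le> q ^ m * c / (1 - q)"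
proof -
  have "suminf f - (\<Sum>i<m. f i) = (\<Sum>n. f (n + m))"
    by (rule suminf_minus_initial_segment[OF series_bound(1)[OF b q], symmetric])
  moreover have "cmod (\<Sum>n. f (n + m)) \<le> q ^ m * c / (1 - q)"
  proof (rule series_bound(2)[OF _ q])
    show "cmod (f (n + m)) \<le> q ^ n * (q ^ m * c)" for n
      using b[of "n + m"] by (simp add: power_add mult.assoc)
  qed
  ultimately show ?thesis by simp
qed

section \<open>Abstract Neumann series on a closed subspace of X*\<close>

lemma dsubspace_plus:
  assumes "dsubspace V" "\<phi> \<in> V" "\<psi> \<in> V" shows "(\<lambda>x. \<phi> x + \<psi> x) \<in> V"
proof -
  have "\<forall>\<phi>\<in>V. \<forall>\<psi>\<in>V. (\<lambda>x. \<phi> x + \<psi> x) \<in> V" using assms(1) by (simp add: dsubspace_def)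
  then show ?thesis using assms(2,3) by simp
qed

lemma dsubspace_cmult:
  assumes "dsubspace V" "\<phi> \<in> V" shows "(\<lambda>x. c * \<phi> x) \<in> V"
proof -
  have "\<forall>c. \<forall>\<phi>\<in>V. (\<lambda>x. c * \<phi> x) \<in> V" using assms(1) by (simp add: dsubspace_def)
  then show ?thesis using assms(2) by simp
qed

lemma dsubspace_zero: "dsubspace V \<Longrightarrow> (\<lambda>x. 0) \<in> V"
  by (simp add: dsubspace_def)

lemma dsubspace_cdual: "dsubspace V \<Longrightarrow> \<phi> \<in> V \<Longrightarrow> \<phi> \<in> cdual"
  by (auto simp: dsubspace_def)

lemma dsubspace_diff:
  assumes V: "dsubspace V" and a: "\<phi> \<in> V" "\<psi> \<in> V" shows "(\<lambda>x. \<phi> x - \<psi> x) \<in> V"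
proof -
  have "(\<lambda>x. (-1) * \<psi> x) \<in> V" by (rule dsubspace_cmult[OF V a(2)])
  from dsubspace_plus[OF V a(1) this] show ?thesis by simp
qed

lemma neumann:
  fixes V :: "('a::complex_banach \<Rightarrow> complex) set"
  assumes V: "dsubspace V" "dclosed V"
    and BV: "\<And>\<phi>. \<phi> \<in> V \<Longrightarrow> B \<phi> \<in> V"
    and Bdiff: "\<And>\<phi> \<psi>. \<phi> \<in> V \<Longrightarrow> \<psi> \<in> V \<Longrightarrow> B (\<lambda>x. \<phi> x - \<psi> x) = (\<lambda>x. B \<phi> x - B \<psi> x)"
    and Bplus: "\<And>\<phi> \<psi>. \<phi> \<in> V \<Longrightarrow> \<psi> \<in> V \<Longrightarrow> B (\<lambda>x. \<phi> x + \<psi> x) = (\<lambda>x. B \<phi> x + B \<psi> x)"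
    and Bn: "\<And>\<phi>. \<phi> \<in> V \<Longrightarrow> dnorm (B \<phi>) \<le> q * dnorm \<phi>" and q: "0 \<le> q" "q < 1"
  obtains N where "\<And>\<phi>. \<phi> \<in> V \<Longrightarrow> N \<phi> \<in> V"
    "\<And>\<phi>. \<phi> \<in> V \<Longrightarrow> dnorm (N \<phi>) \<le> dnorm \<phi> / (1 - q)"
    "\<And>\<phi>. \<phi> \<in> V \<Longrightarrow> N (\<lambda>x. \<phi> x - B \<phi> x) = \<phi>"
    "\<And>\<phi>. \<phi> \<in> V \<Longrightarrow> (\<lambda>x. N \<phi> x - B (N \<phi>) x) = \<phi>"
proof -
  have Vc: "\<phi> \<in> V \<Longrightarrow> \<phi> \<in> cdual" for \<phi> using dsubspace_cdual[OF V(1)] .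
  have PV: "(B ^^ n) \<phi> \<in> V" if "\<phi> \<in> V" for n \<phi>
    by (induction n) (use that BV in auto)
  have Pn: "dnorm ((B ^^ n) \<phi>) \<le> q ^ n * dnorm \<phi>" if \<phi>: "\<phi> \<in> V" for n \<phi>
  proof (induction n)
    case 0 then show ?case by simp
  next
    case (Suc n)
    have "dnorm ((B ^^ Suc n) \<phi>) \<le> q * dnorm ((B ^^ n) \<phi>)" using Bn[OF PV[OF \<phi>]] by simp
    also have "\<dots> \<le> q * (q ^ n * dnorm \<phi>)" by (rule mult_left_mono[OF Suc q(1)])
    finally show ?case by (simp add: mult.assoc)
  qed
  have Pdiff: "(B ^^ n) (\<lambda>x. \<phi> x - \<psi> x) = (\<lambda>x. (B ^^ n) \<phi> x - (B ^^ n) \<psi> x)"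
    if "\<phi> \<in> V" "\<psi> \<in> V" for n \<phi> \<psi>
    by (induction n) (use that Bdiff PV in auto)
  have ev: "cmod ((B ^^ n) \<phi> x) \<le> q ^ n * (dnorm \<phi> * norm x)" if \<phi>: "\<phi> \<in> V" for n \<phi> x
  proof -
    have "cmod ((B ^^ n) \<phi> x) \<le> dnorm ((B ^^ n) \<phi>) * norm x" by (rule cdual_eval[OF Vc[OF PV[OF \<phi>]]])
    also have "\<dots> \<le> (q ^ n * dnorm \<phi>) * norm x" by (rule mult_right_mono[OF Pn[OF \<phi>] norm_ge_zero])
    finally show ?thesis by (simp add: mult.assoc)
  qed
  have sm: "summable (\<lambda>n. (B ^^ n) \<phi> x)" if "\<phi> \<in> V" for \<phi> x
    by (rule series_bound(1)[OF ev[OF that] q])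
  define N where "N \<phi> = (\<lambda>x. \<Sum>n. (B ^^ n) \<phi> x)" for \<phi>
  define s where "s \<phi> m = (\<lambda>x. \<Sum>i<m. (B ^^ i) \<phi> x)" for \<phi> m
  have Nc: "N \<phi> \<in> cdual" if \<phi>: "\<phi> \<in> V" for \<phi>
    unfolding N_def
  proof (rule cdualI[where K="dnorm \<phi> / (1 - q)"])
    fix x y
    have "(\<Sum>n. (B ^^ n) \<phi> (x + y)) = (\<Sum>n. (B ^^ n) \<phi> x + (B ^^ n) \<phi> y)"
      using cdual_add[OF Vc[OF PV[OF \<phi>]]] by simp
    also have "\<dots> = (\<Sum>n. (B ^^ n) \<phi> x) + (\<Sum>n. (B ^^ n) \<phi> y)"
      by (rule suminf_add[OF sm[OF \<phi>] sm[OF \<phi>], symmetric])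
    finally show "(\<Sum>n. (B ^^ n) \<phi> (x + y)) = (\<Sum>n. (B ^^ n) \<phi> x) + (\<Sum>n. (B ^^ n) \<phi> y)" .
  next
    fix c x
    have "(\<Sum>n. (B ^^ n) \<phi> (scaleC c x)) = (\<Sum>n. c * (B ^^ n) \<phi> x)"
      using cdualD_scaleC[OF Vc[OF PV[OF \<phi>]]] by simp
    also have "\<dots> = c * (\<Sum>n. (B ^^ n) \<phi> x)" by (rule suminf_mult[OF sm[OF \<phi>]])
    finally show "(\<Sum>n. (B ^^ n) \<phi> (scaleC c x)) = c * (\<Sum>n. (B ^^ n) \<phi> x)" .
  next
    fix x
    show "cmod (\<Sum>n. (B ^^ n) \<phi> x) \<le> dnorm \<phi> / (1 - q) * norm x"
      using series_bound(2)[OF ev[OF \<phi>] q, of x] by simp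
  qed
  have Nb: "dnorm (N \<phi>) \<le> dnorm \<phi> / (1 - q)" if \<phi>: "\<phi> \<in> V" for \<phi>
  proof (rule dnorm_le)
    show "0 \<le> dnorm \<phi> / (1 - q)" using q dnorm_nonneg[OF Vc[OF \<phi>]] by simp
    show "cmod (N \<phi> x) \<le> dnorm \<phi> / (1 - q) * norm x" for x
      unfolding N_def using series_bound(2)[OF ev[OF \<phi>] q, of x] by simp
  qed
  have sV: "s \<phi> m \<in> V" if \<phi>: "\<phi> \<in> V" for \<phi> m
  proof (induction m)
    case 0 then show ?case using dsubspace_zero[OF V(1)] by (simp add: s_def)
  next
    case (Suc m)
    have "s \<phi> (Suc m) = (\<lambda>x. s \<phi> m x + (B ^^ m) \<phi> x)" by (simp add: s_def)
    then show ?case using dsubspace_plus[OF V(1) Suc PV[OF \<phi>]] by simp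
  qed
  have tail: "dnorm (\<lambda>x. s \<phi> m x - N \<phi> x) \<le> q ^ m * dnorm \<phi> / (1 - q)" if \<phi>: "\<phi> \<in> V" for \<phi> m
  proof (rule dnorm_le)
    show "0 \<le> q ^ m * dnorm \<phi> / (1 - q)" using q dnorm_nonneg[OF Vc[OF \<phi>]] by simp
    fix x
    have "cmod (s \<phi> m x - N \<phi> x) = cmod (N \<phi> x - s \<phi> m x)" by (rule norm_minus_commute)
    also have "\<dots> \<le> q ^ m * (dnorm \<phi> * norm x) / (1 - q)"
      unfolding N_def s_def by (rule series_tail_bound[OF ev[OF \<phi>] q])
    finally show "cmod (s \<phi> m x - N \<phi> x) \<le> q ^ m * dnorm \<phi> / (1 - q) * norm x" by simp
  qed
  have slim: "(\<lambda>m. dnorm (\<lambda>x. s \<phi> m x - N \<phi> x)) \<longlonglongrightarrow> 0" if \<phi>: "\<phi> \<in> V" for \<phi>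
  proof (rule tendsto_sandwich[where f="\<lambda>m. 0" and h="\<lambda>m. q ^ m * dnorm \<phi> / (1 - q)"])
    show "\<forall>\<^sub>F m in sequentially. 0 \<le> dnorm (\<lambda>x. s \<phi> m x - N \<phi> x)"
      using dnorm_nonneg[OF cdual_minus[OF Vc[OF sV[OF \<phi>]] Nc[OF \<phi>]]] by simp
    show "\<forall>\<^sub>F m in sequentially. dnorm (\<lambda>x. s \<phi> m x - N \<phi> x) \<le> q ^ m * dnorm \<phi> / (1 - q)"
      using tail[OF \<phi>] by simp
    have "(\<lambda>m. q ^ m) \<longlonglongrightarrow> 0" by (rule LIMSEQ_power_zero) (use q in simp)
    then show "(\<lambda>m. q ^ m * dnorm \<phi> / (1 - q)) \<longlonglongrightarrow> 0"
      using tendsto_mult_left_zero tendsto_divide_zero by blast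
  qed simp
  have NV: "N \<phi> \<in> V" if \<phi>: "\<phi> \<in> V" for \<phi>
    using V(2) sV[OF \<phi>] Nc[OF \<phi>] slim[OF \<phi>] unfolding dclosed_def by blast
  have tele: "(\<Sum>n. (B ^^ n) \<phi> x - (B ^^ Suc n) \<phi> x) = \<phi> x" if \<phi>: "\<phi> \<in> V" for \<phi> x
  proof -
    have "(\<lambda>n. (B ^^ n) \<phi> x) \<longlonglongrightarrow> 0"
      by (rule summable_LIMSEQ_zero[OF sm[OF \<phi>]])
    then have "(\<lambda>n. (B ^^ n) \<phi> x - (B ^^ Suc n) \<phi> x) sums ((B ^^ 0) \<phi> x - 0)"
      by (rule telescope_sums')
    then show ?thesis by (simp add: sums_iff)
  qed
  have left: "N (\<lambda>x. \<phi> x - B \<phi> x) = \<phi>" if \<phi>: "\<phi> \<in> V" for \<phi>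
  proof
    fix x
    have "(B ^^ n) (\<lambda>x. \<phi> x - B \<phi> x) x = (B ^^ n) \<phi> x - (B ^^ Suc n) \<phi> x" for n
      using Pdiff[OF \<phi> BV[OF \<phi>], of n] by (simp add: funpow_swap1)
    then show "N (\<lambda>x. \<phi> x - B \<phi> x) x = \<phi> x"
      unfolding N_def using tele[OF \<phi>] by simp
  qed
  have B0: "B (\<lambda>x. 0) = (\<lambda>x. 0)"
  proof -
    have z: "(\<lambda>x. 0) \<in> V" by (rule dsubspace_zero[OF V(1)])
    have "dnorm (B (\<lambda>x. 0)) \<le> 0" using Bn[OF z] by simp
    then have "dnorm (B (\<lambda>x. 0)) = 0" using dnorm_nonneg[OF Vc[OF BV[OF z]]] by linarith
    then show ?thesis using dnorm_zero_iff[OF Vc[OF BV[OF z]]] by simp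
  qed
  have Bs: "B (s \<phi> m) x = (\<Sum>i<m. (B ^^ Suc i) \<phi> x)" if \<phi>: "\<phi> \<in> V" for \<phi> m x
  proof (induction m)
    case 0 then show ?case by (simp add: s_def B0)
  next
    case (Suc m)
    have "s \<phi> (Suc m) = (\<lambda>x. s \<phi> m x + (B ^^ m) \<phi> x)" by (simp add: s_def)
    then have "B (s \<phi> (Suc m)) = (\<lambda>x. B (s \<phi> m) x + B ((B ^^ m) \<phi>) x)"
      using Bplus[OF sV[OF \<phi>] PV[OF \<phi>]] by simp
    then show ?case using Suc by simp
  qed
  have right: "(\<lambda>x. N \<phi> x - B (N \<phi>) x) = \<phi>" if \<phi>: "\<phi> \<in> V" for \<phi>
  proof
    fix x
    have lim1: "(\<lambda>m. B (s \<phi> m) x) \<longlonglongrightarrow> B (N \<phi>) x"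
    proof -
      have "(\<lambda>m. B (s \<phi> m) x - B (N \<phi>) x) \<longlonglongrightarrow> 0"
      proof (rule Lim_null_comparison[where g="\<lambda>m. q * dnorm (\<lambda>x. s \<phi> m x - N \<phi> x) * norm x"])
        show "\<forall>\<^sub>F m in sequentially. norm (B (s \<phi> m) x - B (N \<phi>) x) \<le> q * dnorm (\<lambda>x. s \<phi> m x - N \<phi> x) * norm x"
        proof (rule always_eventually, rule allI)
          fix m
          have d: "(\<lambda>x. s \<phi> m x - N \<phi> x) \<in> V" by (rule dsubspace_diff[OF V(1) sV[OF \<phi>] NV[OF \<phi>]])
          have "B (s \<phi> m) x - B (N \<phi>) x = B (\<lambda>x. s \<phi> m x - N \<phi> x) x"
            using Bdiff[OF sV[OF \<phi>] NV[OF \<phi>]] by simp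
          also have "cmod \<dots> \<le> dnorm (B (\<lambda>x. s \<phi> m x - N \<phi> x)) * norm x"
            by (rule cdual_eval[OF Vc[OF BV[OF d]]])
          also have "\<dots> \<le> q * dnorm (\<lambda>x. s \<phi> m x - N \<phi> x) * norm x"
            by (rule mult_right_mono[OF Bn[OF d] norm_ge_zero])
          finally show "norm (B (s \<phi> m) x - B (N \<phi>) x) \<le> q * dnorm (\<lambda>x. s \<phi> m x - N \<phi> x) * norm x" .
        qed
        show "(\<lambda>m. q * dnorm (\<lambda>x. s \<phi> m x - N \<phi> x) * norm x) \<longlonglongrightarrow> 0"
          using tendsto_mult_left_zero[OF tendsto_mult_right_zero[OF slim[OF \<phi>]]] by simp
      qed
      then show ?thesis by (simp add: LIM_zero_iff)
    qed
    have sm2: "summable (\<lambda>n. (B ^^ Suc n) \<phi> x)" using summable_Suc_iff[of "\<lambda>n. (B ^^ n) \<phi> x"] sm[OF \<phi>, of x] by (simp only:)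
    have lim2: "(\<lambda>m. B (s \<phi> m) x) \<longlonglongrightarrow> (\<Sum>n. (B ^^ Suc n) \<phi> x)"
      using summable_LIMSEQ[OF sm2] Bs[OF \<phi>] by simp
    have BN: "B (N \<phi>) x = (\<Sum>n. (B ^^ Suc n) \<phi> x)" by (rule LIMSEQ_unique[OF lim1 lim2])
    have "N \<phi> x - B (N \<phi>) x = (\<Sum>n. (B ^^ n) \<phi> x) - (\<Sum>n. (B ^^ Suc n) \<phi> x)"
      unfolding BN by (simp add: N_def)
    also have "\<dots> = (\<Sum>n. (B ^^ n) \<phi> x - (B ^^ Suc n) \<phi> x)"
      by (rule suminf_diff[OF sm[OF \<phi>] sm2])
    also have "\<dots> = \<phi> x" by (rule tele[OF \<phi>])
    finally show "N \<phi> x - B (N \<phi>) x = \<phi> x" .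
  qed
  show ?thesis by (rule that[OF NV Nb left right])
qed


definition good_sub :: "('a::complex_banach \<Rightarrow> 'a) \<Rightarrow> ('a \<Rightarrow> complex) set \<Rightarrow> bool" where
  "good_sub T V \<longleftrightarrow> dsubspace V \<and> dclosed V \<and> (\<forall>\<phi>\<in>V. adj T \<phi> \<in> V)"

lemma good_cdual: "bounded_clinear_op T \<Longrightarrow> good_sub T cdual"
  unfolding good_sub_def dsubspace_def dclosed_def
  by (auto intro: cdual_plus cdual_cmult cdual_adj)

lemma good_sub_dsub: "good_sub T V \<Longrightarrow> dsubspace V" by (simp add: good_sub_def)
lemma good_sub_V: "good_sub T V \<Longrightarrow> \<phi> \<in> V \<Longrightarrow> \<phi> \<in> cdual"
  by (rule dsubspace_cdual[OF good_sub_dsub])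
lemma good_sub_adj: "good_sub T V \<Longrightarrow> \<phi> \<in> V \<Longrightarrow> adj T \<phi> \<in> V" by (simp add: good_sub_def)

lemma dshift_diff: "dshift (adj T) w (\<lambda>x. a x - b x) = (\<lambda>x. dshift (adj T) w a x - dshift (adj T) w b x)"
  by (simp add: dshift_def adj_def algebra_simps)
lemma dshift_plus: "dshift (adj T) w (\<lambda>x. a x + b x) = (\<lambda>x. dshift (adj T) w a x + dshift (adj T) w b x)"
  by (simp add: dshift_def adj_def algebra_simps)
lemma dshift_cmult: "dshift (adj T) w (\<lambda>x. c * a x) = (\<lambda>x. c * dshift (adj T) w a x)"
  by (simp add: dshift_def adj_def algebra_simps)
lemma dshift_change: "dshift (adj T) w a = (\<lambda>x. dshift (adj T) z a x - (w - z) * a x)"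
  by (simp add: dshift_def adj_def algebra_simps)

lemma dshift_V: "good_sub T V \<Longrightarrow> a \<in> V \<Longrightarrow> dshift (adj T) w a \<in> V"
  unfolding dshift_def
  by (rule dsubspace_diff[OF good_sub_dsub good_sub_adj dsubspace_cmult[OF good_sub_dsub]])

definition res :: "('a::complex_banach \<Rightarrow> complex) set \<Rightarrow> ('a \<Rightarrow> 'a) \<Rightarrow> complex \<Rightarrow> ('a \<Rightarrow> complex) \<Rightarrow> ('a \<Rightarrow> complex)" where
  "res V T w \<psi> = (THE \<eta>. \<eta> \<in> V \<and> dshift (adj T) w \<eta> = \<psi>)"

lemma not_spec_D:
  assumes "w \<notin> dspectrum_on V (adj T)"
  obtains S K where "\<And>\<phi>. \<phi> \<in> V \<Longrightarrow> S \<phi> \<in> V" "\<And>\<phi>. \<phi> \<in> V \<Longrightarrow> dnorm (S \<phi>) \<le> K * dnorm \<phi>"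
    "\<And>\<phi>. \<phi> \<in> V \<Longrightarrow> S (dshift (adj T) w \<phi>) = \<phi>" "\<And>\<phi>. \<phi> \<in> V \<Longrightarrow> dshift (adj T) w (S \<phi>) = \<phi>"
  using assms unfolding dspectrum_on_def by blast

lemma not_specI:
  assumes "\<And>\<phi>. \<phi> \<in> V \<Longrightarrow> S \<phi> \<in> V" "\<And>\<phi>. \<phi> \<in> V \<Longrightarrow> dnorm (S \<phi>) \<le> K * dnorm \<phi>"
    "\<And>\<phi>. \<phi> \<in> V \<Longrightarrow> S (dshift (adj T) w \<phi>) = \<phi>" "\<And>\<phi>. \<phi> \<in> V \<Longrightarrow> dshift (adj T) w (S \<phi>) = \<phi>"
  shows "w \<notin> dspectrum_on V (adj T)"
proof -
  have "\<exists>S. (\<forall>\<phi>\<in>V. S \<phi> \<in> V) \<and> (\<exists>K. \<forall>\<phi>\<in>V. dnorm (S \<phi>) \<le> K * dnorm \<phi>) \<and>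
       (\<forall>\<phi>\<in>V. S (dshift (adj T) w \<phi>) = \<phi>) \<and> (\<forall>\<phi>\<in>V. dshift (adj T) w (S \<phi>) = \<phi>)"
    using assms by blast
  then show ?thesis unfolding dspectrum_on_def by simp
qed

lemma shift_inj:
  assumes "w \<notin> dspectrum_on V (adj T)" "a \<in> V" "b \<in> V" "dshift (adj T) w a = dshift (adj T) w b"
  shows "a = b"
proof -
  obtain S K where S: "\<And>\<phi>. \<phi> \<in> V \<Longrightarrow> S (dshift (adj T) w \<phi>) = \<phi>"
    using not_spec_D[OF assms(1)] by metis
  have "a = S (dshift (adj T) w a)" using S[OF assms(2)] by simp
  also have "\<dots> = S (dshift (adj T) w b)" using assms(4) by simp
  also have "\<dots> = b" using S[OF assms(3)] by simp
  finally show ?thesis .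
qed

lemma res_props:
  assumes w: "w \<notin> dspectrum_on V (adj T)" and \<psi>: "\<psi> \<in> V"
  shows "res V T w \<psi> \<in> V" "dshift (adj T) w (res V T w \<psi>) = \<psi>"
proof -
  obtain S K where S: "\<And>\<phi>. \<phi> \<in> V \<Longrightarrow> S \<phi> \<in> V"
    "\<And>\<phi>. \<phi> \<in> V \<Longrightarrow> dshift (adj T) w (S \<phi>) = \<phi>"
    using not_spec_D[OF w] by metis
  have ex: "\<exists>!\<eta>. \<eta> \<in> V \<and> dshift (adj T) w \<eta> = \<psi>"
  proof (rule ex1I[where a="S \<psi>"])
    show "S \<psi> \<in> V \<and> dshift (adj T) w (S \<psi>) = \<psi>" using S \<psi> by auto
    fix \<eta> assume "\<eta> \<in> V \<and> dshift (adj T) w \<eta> = \<psi>"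
    then show "\<eta> = S \<psi>" using shift_inj[OF w, of \<eta> "S \<psi>"] S \<psi> by auto
  qed
  have "res V T w \<psi> \<in> V \<and> dshift (adj T) w (res V T w \<psi>) = \<psi>"
    unfolding res_def by (rule theI'[OF ex])
  then show "res V T w \<psi> \<in> V" "dshift (adj T) w (res V T w \<psi>) = \<psi>" by auto
qed

lemma res_unique:
  assumes w: "w \<notin> dspectrum_on V (adj T)" and \<psi>: "\<psi> \<in> V" and \<eta>: "\<eta> \<in> V" "dshift (adj T) w \<eta> = \<psi>"
  shows "res V T w \<psi> = \<eta>"
  using shift_inj[OF w res_props(1)[OF w \<psi>] \<eta>(1)] res_props(2)[OF w \<psi>] \<eta>(2) by simp

lemma res_left:
  assumes "good_sub T V" "w \<notin> dspectrum_on V (adj T)" "\<phi> \<in> V"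
  shows "res V T w (dshift (adj T) w \<phi>) = \<phi>"
  by (rule res_unique[OF assms(2) dshift_V[OF assms(1,3)] assms(3) refl])

lemma res_bound:
  assumes d: "dsubspace V" and w: "w \<notin> dspectrum_on V (adj T)"
  obtains K where "K > 0" "\<And>\<psi>. \<psi> \<in> V \<Longrightarrow> dnorm (res V T w \<psi>) \<le> K * dnorm \<psi>"
proof -
  obtain S K where S: "\<And>\<phi>. \<phi> \<in> V \<Longrightarrow> S \<phi> \<in> V" "\<And>\<phi>. \<phi> \<in> V \<Longrightarrow> dnorm (S \<phi>) \<le> K * dnorm \<phi>"
    "\<And>\<phi>. \<phi> \<in> V \<Longrightarrow> dshift (adj T) w (S \<phi>) = \<phi>"
    using not_spec_D[OF w] by metis
  show ?thesis
  proof (rule that[of "max K 1"])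
    show "max K 1 > 0" by simp
    fix \<psi> assume \<psi>: "\<psi> \<in> V"
    have "res V T w \<psi> = S \<psi>" by (rule res_unique[OF w \<psi> S(1)[OF \<psi>] S(3)[OF \<psi>]])
    then have "dnorm (res V T w \<psi>) \<le> K * dnorm \<psi>" using S(2)[OF \<psi>] by simp
    also have "\<dots> \<le> max K 1 * dnorm \<psi>"
      by (rule mult_right_mono) (use dnorm_nonneg[OF dsubspace_cdual[OF d \<psi>]] in \<open>auto\<close>)
    finally show "dnorm (res V T w \<psi>) \<le> max K 1 * dnorm \<psi>" .
  qed
qed

lemma res_diff:
  assumes V: "good_sub T V" and w: "w \<notin> dspectrum_on V (adj T)" and a: "a \<in> V" "b \<in> V"
  shows "res V T w (\<lambda>x. a x - b x) = (\<lambda>x. res V T w a x - res V T w b x)"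
proof (rule res_unique[OF w])
  have d: "dsubspace V" using V by (rule good_sub_dsub)
  show "(\<lambda>x. a x - b x) \<in> V" by (rule dsubspace_diff[OF d a])
  show "(\<lambda>x. res V T w a x - res V T w b x) \<in> V"
    by (rule dsubspace_diff[OF d res_props(1)[OF w a(1)] res_props(1)[OF w a(2)]])
  show "dshift (adj T) w (\<lambda>x. res V T w a x - res V T w b x) = (\<lambda>x. a x - b x)"
    by (simp add: dshift_diff res_props(2)[OF w a(1)] res_props(2)[OF w a(2)])
qed

lemma res_plus:
  assumes V: "good_sub T V" and w: "w \<notin> dspectrum_on V (adj T)" and a: "a \<in> V" "b \<in> V"
  shows "res V T w (\<lambda>x. a x + b x) = (\<lambda>x. res V T w a x + res V T w b x)"
proof (rule res_unique[OF w])
  have d: "dsubspace V" using V by (rule good_sub_dsub)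
  show "(\<lambda>x. a x + b x) \<in> V" by (rule dsubspace_plus[OF d a])
  show "(\<lambda>x. res V T w a x + res V T w b x) \<in> V"
    by (rule dsubspace_plus[OF d res_props(1)[OF w a(1)] res_props(1)[OF w a(2)]])
  show "dshift (adj T) w (\<lambda>x. res V T w a x + res V T w b x) = (\<lambda>x. a x + b x)"
    by (simp add: dshift_plus res_props(2)[OF w a(1)] res_props(2)[OF w a(2)])
qed

lemma res_cmult:
  assumes V: "good_sub T V" and w: "w \<notin> dspectrum_on V (adj T)" and a: "a \<in> V"
  shows "res V T w (\<lambda>x. c * a x) = (\<lambda>x. c * res V T w a x)"
proof (rule res_unique[OF w])
  have d: "dsubspace V" using V by (rule good_sub_dsub)
  show "(\<lambda>x. c * a x) \<in> V" by (rule dsubspace_cmult[OF d a])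
  show "(\<lambda>x. c * res V T w a x) \<in> V"
    by (rule dsubspace_cmult[OF d res_props(1)[OF w a(1)]])
  show "dshift (adj T) w (\<lambda>x. c * res V T w a x) = (\<lambda>x. c * a x)"
    by (simp add: dshift_cmult res_props(2)[OF w a(1)])
qed

lemma good_sub_dclosed: "good_sub T V \<Longrightarrow> dclosed V" by (simp add: good_sub_def)

lemma neumann_near:
  assumes T: "bounded_clinear_op T" and V: "good_sub T V" and z: "z \<notin> dspectrum_on V (adj T)"
    and K: "K > 0" and Kb: "\<And>\<psi>. \<psi> \<in> V \<Longrightarrow> dnorm (res V T z \<psi>) \<le> K * dnorm \<psi>"
    and wz: "cmod (w - z) \<le> 1 / (2 * K)"
  shows "w \<notin> dspectrum_on V (adj T)" "\<And>\<psi>. \<psi> \<in> V \<Longrightarrow> dnorm (res V T w \<psi>) \<le> (2 * K) * dnorm \<psi>"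
proof -
  have d: "dsubspace V" using V by (rule good_sub_dsub)
  define B where "B \<phi> = (\<lambda>x. (w - z) * res V T z \<phi> x)" for \<phi>
  have BV: "B \<phi> \<in> V" if "\<phi> \<in> V" for \<phi>
    unfolding B_def by (rule dsubspace_cmult[OF d res_props(1)[OF z that]])
  have Bdiff: "B (\<lambda>x. \<phi> x - \<psi> x) = (\<lambda>x. B \<phi> x - B \<psi> x)" if "\<phi> \<in> V" "\<psi> \<in> V" for \<phi> \<psi>
    unfolding B_def by (simp add: res_diff[OF V z that] algebra_simps)
  have Bplus: "B (\<lambda>x. \<phi> x + \<psi> x) = (\<lambda>x. B \<phi> x + B \<psi> x)" if "\<phi> \<in> V" "\<psi> \<in> V" for \<phi> \<psi>
    unfolding B_def by (simp add: res_plus[OF V z that] algebra_simps)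
  have Bn: "dnorm (B \<phi>) \<le> (1/2) * dnorm \<phi>" if \<phi>: "\<phi> \<in> V" for \<phi>
  proof -
    have rc: "res V T z \<phi> \<in> cdual" by (rule dsubspace_cdual[OF d res_props(1)[OF z \<phi>]])
    have "dnorm (B \<phi>) \<le> cmod (w - z) * dnorm (res V T z \<phi>)"
      unfolding B_def by (rule dnorm_cmult[OF rc])
    also have "\<dots> \<le> (1 / (2 * K)) * (K * dnorm \<phi>)"
      by (rule mult_mono[OF wz Kb[OF \<phi>]]) (use K dnorm_nonneg[OF rc] in auto)
    also have "\<dots> = (1/2) * dnorm \<phi>" using K by simp
    finally show ?thesis .
  qed
  obtain N where N: "\<And>\<phi>. \<phi> \<in> V \<Longrightarrow> N \<phi> \<in> V"
    "\<And>\<phi>. \<phi> \<in> V \<Longrightarrow> dnorm (N \<phi>) \<le> dnorm \<phi> / (1 - 1/2)"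
    "\<And>\<phi>. \<phi> \<in> V \<Longrightarrow> N (\<lambda>x. \<phi> x - B \<phi> x) = \<phi>"
    "\<And>\<phi>. \<phi> \<in> V \<Longrightarrow> (\<lambda>x. N \<phi> x - B (N \<phi>) x) = \<phi>"
    by (rule neumann[OF d good_sub_dclosed[OF V] BV Bdiff Bplus Bn]) auto
  define S where "S \<psi> = N (res V T z \<psi>)" for \<psi>
  have SV: "S \<psi> \<in> V" if "\<psi> \<in> V" for \<psi> unfolding S_def by (rule N(1)[OF res_props(1)[OF z that]])
  have Sb: "dnorm (S \<psi>) \<le> (2 * K) * dnorm \<psi>" if \<psi>: "\<psi> \<in> V" for \<psi>
  proof -
    have "dnorm (S \<psi>) \<le> dnorm (res V T z \<psi>) / (1 - 1/2)"
      unfolding S_def by (rule N(2)[OF res_props(1)[OF z \<psi>]])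
    also have "\<dots> \<le> (K * dnorm \<psi>) / (1 - 1/2)" using Kb[OF \<psi>] by simp
    finally show ?thesis by simp
  qed
  have shift_w: "dshift (adj T) w \<eta> = dshift (adj T) z (\<lambda>x. \<eta> x - B \<eta> x)" if \<eta>: "\<eta> \<in> V" for \<eta>
  proof -
    have "dshift (adj T) z (\<lambda>x. \<eta> x - B \<eta> x)
        = (\<lambda>x. dshift (adj T) z \<eta> x - (w - z) * dshift (adj T) z (res V T z \<eta>) x)"
      unfolding B_def by (simp add: dshift_diff dshift_cmult)
    also have "\<dots> = (\<lambda>x. dshift (adj T) z \<eta> x - (w - z) * \<eta> x)"
      by (simp add: res_props(2)[OF z \<eta>])
    also have "\<dots> = dshift (adj T) w \<eta>" by (rule dshift_change[symmetric])
    finally show ?thesis by simp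
  qed
  have r1: "dshift (adj T) w (S \<psi>) = \<psi>" if \<psi>: "\<psi> \<in> V" for \<psi>
  proof -
    have "dshift (adj T) w (S \<psi>) = dshift (adj T) z (\<lambda>x. S \<psi> x - B (S \<psi>) x)"
      by (rule shift_w[OF SV[OF \<psi>]])
    also have "(\<lambda>x. S \<psi> x - B (S \<psi>) x) = res V T z \<psi>"
      unfolding S_def by (rule N(4)[OF res_props(1)[OF z \<psi>]])
    finally show ?thesis using res_props(2)[OF z \<psi>] by simp
  qed
  have l1: "S (dshift (adj T) w \<phi>) = \<phi>" if \<phi>: "\<phi> \<in> V" for \<phi>
  proof -
    have dV: "(\<lambda>x. \<phi> x - B \<phi> x) \<in> V" by (rule dsubspace_diff[OF d \<phi> BV[OF \<phi>]])
    have "res V T z (dshift (adj T) w \<phi>) = (\<lambda>x. \<phi> x - B \<phi> x)"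
      unfolding shift_w[OF \<phi>] by (rule res_left[OF V z dV])
    then show ?thesis unfolding S_def using N(3)[OF \<phi>] by simp
  qed
  show ws: "w \<notin> dspectrum_on V (adj T)" by (rule not_specI[OF SV Sb l1 r1])
  fix \<psi> assume \<psi>: "\<psi> \<in> V"
  have "res V T w \<psi> = S \<psi>" by (rule res_unique[OF ws \<psi> SV[OF \<psi>] r1[OF \<psi>]])
  then show "dnorm (res V T w \<psi>) \<le> (2 * K) * dnorm \<psi>" using Sb[OF \<psi>] by simp
qed

lemma neumann_inf:
  assumes T: "bounded_clinear_op T" and V: "good_sub T V" and w: "onorm T < cmod w"
  shows "w \<notin> dspectrum_on V (adj T)"
proof -
  have d: "dsubspace V" using V by (rule good_sub_dsub)
  have w0: "w \<noteq> 0" using w bcop_onorm_nonneg[OF T] by auto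
  define q where "q = onorm T / cmod w"
  have wp: "0 < cmod w" using w bcop_onorm_nonneg[OF T] by linarith
  have q: "0 \<le> q" "q < 1" using w wp bcop_onorm_nonneg[OF T] by (auto simp: q_def divide_less_eq)
  define B where "B \<phi> = (\<lambda>x. (1 / w) * adj T \<phi> x)" for \<phi>
  have BV: "B \<phi> \<in> V" if "\<phi> \<in> V" for \<phi>
    unfolding B_def by (rule dsubspace_cmult[OF d good_sub_adj[OF V that]])
  have Bdiff: "B (\<lambda>x. \<phi> x - \<psi> x) = (\<lambda>x. B \<phi> x - B \<psi> x)" for \<phi> \<psi>
    unfolding B_def by (simp add: adj_def algebra_simps)
  have Bplus: "B (\<lambda>x. \<phi> x + \<psi> x) = (\<lambda>x. B \<phi> x + B \<psi> x)" for \<phi> \<psi>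
    unfolding B_def by (simp add: adj_def algebra_simps)
  have Bn: "dnorm (B \<phi>) \<le> q * dnorm \<phi>" if \<phi>: "\<phi> \<in> V" for \<phi>
  proof -
    have pc: "\<phi> \<in> cdual" by (rule dsubspace_cdual[OF d \<phi>])
    have "dnorm (B \<phi>) \<le> cmod (1 / w) * dnorm (adj T \<phi>)"
      unfolding B_def by (rule dnorm_cmult[OF cdual_adj[OF T pc]])
    also have "\<dots> \<le> cmod (1 / w) * (onorm T * dnorm \<phi>)"
      by (rule mult_left_mono[OF dnorm_adj[OF T pc] norm_ge_zero])
    also have "\<dots> = q * dnorm \<phi>" by (simp add: q_def norm_divide)
    finally show ?thesis .
  qed
  obtain N where N: "\<And>\<phi>. \<phi> \<in> V \<Longrightarrow> N \<phi> \<in> V"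
    "\<And>\<phi>. \<phi> \<in> V \<Longrightarrow> dnorm (N \<phi>) \<le> dnorm \<phi> / (1 - q)"
    "\<And>\<phi>. \<phi> \<in> V \<Longrightarrow> N (\<lambda>x. \<phi> x - B \<phi> x) = \<phi>"
    "\<And>\<phi>. \<phi> \<in> V \<Longrightarrow> (\<lambda>x. N \<phi> x - B (N \<phi>) x) = \<phi>"
    by (rule neumann[OF d good_sub_dclosed[OF V] BV Bdiff Bplus Bn q]) auto
  define S where "S \<psi> = N (\<lambda>x. (- 1 / w) * \<psi> x)" for \<psi>
  have cV: "(\<lambda>x. (- 1 / w) * \<psi> x) \<in> V" if "\<psi> \<in> V" for \<psi> by (rule dsubspace_cmult[OF d that])
  have SV: "S \<psi> \<in> V" if "\<psi> \<in> V" for \<psi> unfolding S_def by (rule N(1)[OF cV[OF that]])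
  have Sb: "dnorm (S \<psi>) \<le> (1 / (cmod w * (1 - q))) * dnorm \<psi>" if \<psi>: "\<psi> \<in> V" for \<psi>
  proof -
    have pc: "\<psi> \<in> cdual" by (rule dsubspace_cdual[OF d \<psi>])
    have "dnorm (S \<psi>) \<le> dnorm (\<lambda>x. (- 1 / w) * \<psi> x) / (1 - q)"
      unfolding S_def by (rule N(2)[OF cV[OF \<psi>]])
    also have "\<dots> \<le> (cmod (- 1 / w) * dnorm \<psi>) / (1 - q)"
      by (rule divide_right_mono[OF dnorm_cmult[OF pc]]) (use q in simp)
    finally show ?thesis by (simp add: norm_divide)
  qed
  have sh: "dshift (adj T) w \<eta> = (\<lambda>x. (- w) * (\<eta> x - B \<eta> x))" for \<eta>
    unfolding B_def using w0 by (simp add: dshift_def algebra_simps fun_eq_iff)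
  have r1: "dshift (adj T) w (S \<psi>) = \<psi>" if \<psi>: "\<psi> \<in> V" for \<psi>
  proof -
    have e: "(\<lambda>x. S \<psi> x - B (S \<psi>) x) = (\<lambda>x. (- 1 / w) * \<psi> x)"
      unfolding S_def by (rule N(4)[OF cV[OF \<psi>]])
    have "dshift (adj T) w (S \<psi>) = (\<lambda>x. (- w) * (S \<psi> x - B (S \<psi>) x))" by (rule sh)
    also have "\<dots> = (\<lambda>x. (- w) * ((- 1 / w) * \<psi> x))" using fun_cong[OF e] by simp
    also have "\<dots> = \<psi>" using w0 by (simp add: fun_eq_iff)
    finally show ?thesis .
  qed
  have l1: "S (dshift (adj T) w \<phi>) = \<phi>" if \<phi>: "\<phi> \<in> V" for \<phi>
  proof -
    have "(\<lambda>x. (- 1 / w) * dshift (adj T) w \<phi> x) = (\<lambda>x. \<phi> x - B \<phi> x)"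
      unfolding sh using w0 by (simp add: fun_eq_iff)
    then show ?thesis unfolding S_def using N(3)[OF \<phi>] by simp
  qed
  show ?thesis by (rule not_specI[OF SV Sb l1 r1])
qed


lemma res_identity:
  assumes V: "good_sub T V" and w: "w \<notin> dspectrum_on V (adj T)" and w': "w' \<notin> dspectrum_on V (adj T)"
    and \<psi>: "\<psi> \<in> V"
  shows "(\<lambda>x. res V T w \<psi> x - res V T w' \<psi> x) = (\<lambda>x. (w - w') * res V T w (res V T w' \<psi>) x)"
proof (rule shift_inj[OF w])
  have d: "dsubspace V" using V by (rule good_sub_dsub)
  have r': "res V T w' \<psi> \<in> V" by (rule res_props(1)[OF w' \<psi>])
  show "(\<lambda>x. res V T w \<psi> x - res V T w' \<psi> x) \<in> V"
    by (rule dsubspace_diff[OF d res_props(1)[OF w \<psi>] r'])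
  show "(\<lambda>x. (w - w') * res V T w (res V T w' \<psi>) x) \<in> V"
    by (rule dsubspace_cmult[OF d res_props(1)[OF w r']])
  have e: "dshift (adj T) w (res V T w' \<psi>) = (\<lambda>x. \<psi> x - (w - w') * res V T w' \<psi> x)"
    using dshift_change[of T w "res V T w' \<psi>" w'] res_props(2)[OF w' \<psi>] by simp
  show "dshift (adj T) w (\<lambda>x. res V T w \<psi> x - res V T w' \<psi> x)
      = dshift (adj T) w (\<lambda>x. (w - w') * res V T w (res V T w' \<psi>) x)"
    unfolding dshift_diff dshift_cmult res_props(2)[OF w \<psi>] res_props(2)[OF w r'] e
    by simp
qed

lemma res_analytic:
  assumes T: "bounded_clinear_op T" and V: "good_sub T V" and z: "z \<notin> dspectrum_on V (adj T)"
    and K: "K > 0" and Kb: "\<And>\<psi>. \<psi> \<in> V \<Longrightarrow> dnorm (res V T z \<psi>) \<le> K * dnorm \<psi>"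
    and \<psi>: "\<psi> \<in> V"
  shows "loc_sol T \<psi> (ball z (1 / (2 * K))) (\<lambda>w. res V T w \<psi>)"
proof -
  have d: "dsubspace V" using V by (rule good_sub_dsub)
  define U where "U = ball z (1 / (2 * K))"
  have inU: "w \<notin> dspectrum_on V (adj T)" "\<And>\<phi>. \<phi> \<in> V \<Longrightarrow> dnorm (res V T w \<phi>) \<le> (2 * K) * dnorm \<phi>"
    if "w \<in> U" for w
  proof -
    have "cmod (w - z) \<le> 1 / (2 * K)" using that by (auto simp: U_def dist_norm norm_minus_commute)
    then show "w \<notin> dspectrum_on V (adj T)" "\<And>\<phi>. \<phi> \<in> V \<Longrightarrow> dnorm (res V T w \<phi>) \<le> (2 * K) * dnorm \<phi>"
      using neumann_near[OF T V z K Kb] by auto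
  qed
  have an: "dual_analytic_on (\<lambda>w. res V T w \<psi>) U"
    unfolding dual_analytic_on_def
  proof (intro conjI ballI)
    show "open U" by (simp add: U_def)
    show "res V T w \<psi> \<in> cdual" if "w \<in> U" for w
      by (rule dsubspace_cdual[OF d res_props(1)[OF inU(1)[OF that] \<psi>]])
    fix w0 assume w0: "w0 \<in> U"
    have s0: "w0 \<notin> dspectrum_on V (adj T)" by (rule inU(1)[OF w0])
    define \<eta> where "\<eta> = res V T w0 \<psi>"
    have \<eta>V: "\<eta> \<in> V" unfolding \<eta>_def by (rule res_props(1)[OF s0 \<psi>])
    have G: "res V T w0 \<eta> \<in> cdual" by (rule dsubspace_cdual[OF d res_props(1)[OF s0 \<eta>V]])
    define C where "C = 2 * K * dnorm (res V T w0 \<eta>)"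
    have ev: "eventually (\<lambda>w. w \<in> U - {w0}) (at w0)" by (rule eventually_at_in_open[OF _ w0]) (simp add: U_def)
    have key: "dnorm (\<lambda>x. (res V T w \<psi> x - res V T w0 \<psi> x) / (w - w0) - res V T w0 \<eta> x) \<le> cmod (w - w0) * C"
      if w: "w \<in> U - {w0}" for w
    proof -
      have sw: "w \<notin> dspectrum_on V (adj T)" using inU(1) w by auto
      have nz: "w - w0 \<noteq> 0" using w by auto
      have i1: "res V T w \<psi> x - res V T w0 \<psi> x = (w - w0) * res V T w \<eta> x" for x
        using fun_cong[OF res_identity[OF V sw s0 \<psi>], of x] by (simp add: \<eta>_def)
      have i2: "res V T w \<eta> x - res V T w0 \<eta> x = (w - w0) * res V T w (res V T w0 \<eta>) x" for x
        using fun_cong[OF res_identity[OF V sw s0 \<eta>V], of x] by simp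
      have "(\<lambda>x. (res V T w \<psi> x - res V T w0 \<psi> x) / (w - w0) - res V T w0 \<eta> x)
          = (\<lambda>x. (w - w0) * res V T w (res V T w0 \<eta>) x)"
        using nz by (simp add: i1 i2 [symmetric])
      moreover have rr: "res V T w (res V T w0 \<eta>) \<in> cdual"
        by (rule dsubspace_cdual[OF d res_props(1)[OF sw res_props(1)[OF s0 \<eta>V]]])
      moreover have "dnorm (res V T w (res V T w0 \<eta>)) \<le> 2 * K * dnorm (res V T w0 \<eta>)"
        using inU(2)[of w "res V T w0 \<eta>"] w res_props(1)[OF s0 \<eta>V] by auto
      ultimately show ?thesis
        using dnorm_cmult[OF rr, of "w - w0"] mult_left_mono[of _ _ "cmod (w - w0)"]
        by (fastforce simp: C_def)
    qed
    have "((\<lambda>w. dnorm (\<lambda>x. (res V T w \<psi> x - res V T w0 \<psi> x) / (w - w0) - res V T w0 \<eta> x)) \<longlongrightarrow> 0) (at w0)"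
    proof (rule tendsto_sandwich[where f="\<lambda>w. 0" and h="\<lambda>w. cmod (w - w0) * C"])
      show "\<forall>\<^sub>F w in at w0. 0 \<le> dnorm (\<lambda>x. (res V T w \<psi> x - res V T w0 \<psi> x) / (w - w0) - res V T w0 \<eta> x)"
        by (rule eventually_mono[OF ev], rule dnorm_nonneg, rule cdual_quot[OF _ _ G])
          (auto intro!: dsubspace_cdual[OF d] res_props(1)[OF _ \<psi>] inU(1) s0)
      show "\<forall>\<^sub>F w in at w0. dnorm (\<lambda>x. (res V T w \<psi> x - res V T w0 \<psi> x) / (w - w0) - res V T w0 \<eta> x)
          \<le> cmod (w - w0) * C"
        by (rule eventually_mono[OF ev]) (rule key)
      have "((\<lambda>w. cmod (w - w0)) \<longlongrightarrow> 0) (at w0)"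
        by (intro tendsto_norm_zero LIM_zero tendsto_ident_at)
      then show "((\<lambda>w. cmod (w - w0) * C) \<longlongrightarrow> 0) (at w0)" by (rule tendsto_mult_left_zero)
    qed simp
    then show "\<exists>G\<in>cdual. ((\<lambda>w. dnorm (\<lambda>x. (res V T w \<psi> x - res V T w0 \<psi> x) / (w - w0) - G x)) \<longlongrightarrow> 0) (at w0)"
      using G by blast
  qed
  have "\<forall>w\<in>U. dshift (adj T) w (res V T w \<psi>) = \<psi>" using res_props(2)[OF inU(1) \<psi>] by auto
  then show ?thesis using an by (simp add: loc_sol_def U_def)
qed

lemma local_spectrum_subset:
  assumes T: "bounded_clinear_op T" and V: "good_sub T V" and \<psi>: "\<psi> \<in> V"
  shows "adj_local_spectrum T \<psi> \<subseteq> dspectrum_on V (adj T)"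
proof
  fix z assume zl: "z \<in> adj_local_spectrum T \<psi>"
  show "z \<in> dspectrum_on V (adj T)"
  proof (rule ccontr)
    assume z: "z \<notin> dspectrum_on V (adj T)"
    obtain K where K: "K > 0" "\<And>\<psi>. \<psi> \<in> V \<Longrightarrow> dnorm (res V T z \<psi>) \<le> K * dnorm \<psi>"
      using res_bound[OF good_sub_dsub[OF V] z] by metis
    have "ball z (1 / (2 * K)) \<subseteq> adj_local_resolvent T \<psi>"
      by (rule local_resolventI[OF res_analytic[OF T V z K \<psi>]])
    then have "z \<in> adj_local_resolvent T \<psi>" using K by auto
    then show False using zl by (simp add: adj_local_spectrum_def)
  qed
qed

lemma local_spectrum_eq:
  assumes T: "bounded_clinear_op T" and D: "dense_hyp T" and \<phi>: "\<phi> \<in> cdual" and nz: "\<phi> \<noteq> (\<lambda>x. 0)"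
  shows "adj_local_spectrum T \<phi> = adj_spectrum T"
  using local_spectrum_subset[OF T good_cdual[OF T] \<phi>] adj_spectrum_subset_local[OF T D \<phi> nz]
  by (auto simp: adj_spectrum_def)

lemma claim_ii:
  assumes T: "bounded_clinear_op T" and D: "dense_hyp T"
  shows "adj_property_C T"
  unfolding adj_property_C_def
proof (intro allI impI)
  fix F :: "complex set" assume F: "closed F"
  show "dclosed (adj_local_subspace T F)"
  proof (cases "adj_spectrum T \<subseteq> F")
    case True
    have "adj_local_subspace T F = cdual"
      using local_spectrum_eq[OF T D] True local_spectrum_zero[of T]
      by (auto simp: adj_local_subspace_def)
    then show ?thesis by (simp add: dclosed_def)
  next
    case False
    have e: "adj_local_subspace T F = {\<lambda>x. 0}"
      using local_spectrum_eq[OF T D] False local_spectrum_zero[of T]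
      by (auto simp: adj_local_subspace_def)
    show ?thesis unfolding e dclosed_def
    proof (intro conjI allI impI)
      fix s and \<phi> :: "'a \<Rightarrow> complex"
      assume s: "\<forall>n. s n \<in> {\<lambda>x. 0}" and \<phi>: "\<phi> \<in> cdual"
        and l: "(\<lambda>n. dnorm (\<lambda>x. s n x - \<phi> x)) \<longlonglongrightarrow> 0"
      have "(\<lambda>n. dnorm (\<lambda>x. s n x - \<phi> x)) = (\<lambda>n. dnorm (\<lambda>x. (-1) * \<phi> x))" using s by simp
      moreover have "dnorm (\<lambda>x. (-1) * \<phi> x) = dnorm \<phi>"
      proof -
        have "dnorm (\<lambda>x. (-1) * \<phi> x) \<le> dnorm \<phi>" using dnorm_cmult[OF \<phi>, of "-1"] by simp
        moreover have "dnorm \<phi> \<le> dnorm (\<lambda>x. (-1) * \<phi> x)"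
          using dnorm_cmult[OF cdual_cmult[OF \<phi>, of "-1"], of "-1"] by simp
        ultimately show ?thesis by simp
      qed
      ultimately have "(\<lambda>n. dnorm \<phi>) \<longlonglongrightarrow> 0" using l by simp
      then have "dnorm \<phi> = 0" by (simp add: LIMSEQ_const_iff)
      then show "\<phi> \<in> {\<lambda>x. 0}" using dnorm_zero_iff[OF \<phi>] by simp
    qed auto
  qed
qed


lemma spec_open_compl:
  assumes T: "bounded_clinear_op T" and V: "good_sub T V" and z: "z \<notin> dspectrum_on V (adj T)"
  obtains e where "e > 0" "ball z e \<subseteq> - dspectrum_on V (adj T)"
proof -
  obtain K where K: "K > 0" "\<And>\<psi>. \<psi> \<in> V \<Longrightarrow> dnorm (res V T z \<psi>) \<le> K * dnorm \<psi>"
    using res_bound[OF good_sub_dsub[OF V] z] by metis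
  have "ball z (1 / (2 * K)) \<subseteq> - dspectrum_on V (adj T)"
  proof
    fix w assume "w \<in> ball z (1 / (2 * K))"
    then have "cmod (w - z) \<le> 1 / (2 * K)" by (auto simp: dist_norm norm_minus_commute)
    then show "w \<in> - dspectrum_on V (adj T)" using neumann_near(1)[OF T V z K] by auto
  qed
  then show ?thesis by (rule that[rotated]) (use K in auto)
qed

lemma spec_closed:
  assumes T: "bounded_clinear_op T" and V: "good_sub T V"
  shows "closed (dspectrum_on V (adj T))"
proof -
  have "open (- dspectrum_on V (adj T))"
    unfolding open_contains_ball using spec_open_compl[OF T V] by (metis ComplD)
  then show ?thesis by (simp add: closed_open)
qed

lemma spec_bounded:
  assumes T: "bounded_clinear_op T" and V: "good_sub T V"
  shows "dspectrum_on V (adj T) \<subseteq> cball 0 (onorm T)"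
proof
  fix w assume "w \<in> dspectrum_on V (adj T)"
  then have "\<not> onorm T < cmod w" using neumann_inf[OF T V] by blast
  then show "w \<in> cball 0 (onorm T)" by simp
qed

lemma res_restrict:
  assumes T: "bounded_clinear_op T" and M: "good_sub T M"
    and u: "u \<notin> adj_spectrum T" "u \<notin> dspectrum_on M (adj T)" and \<psi>: "\<psi> \<in> M"
  shows "res M T u \<psi> = res cdual T u \<psi>"
proof -
  have u': "u \<notin> dspectrum_on cdual (adj T)" using u(1) by (simp add: adj_spectrum_def)
  have "res cdual T u \<psi> = res M T u \<psi>"
    by (rule res_unique[OF u' good_sub_V[OF M \<psi>] good_sub_V[OF M res_props(1)[OF u(2) \<psi>]]
          res_props(2)[OF u(2) \<psi>]])
  then show ?thesis by simp
qed

lemma interior_M: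
  assumes T: "bounded_clinear_op T" and M: "good_sub T M"
    and w: "w \<notin> adj_spectrum T" "w \<in> dspectrum_on M (adj T)"
  obtains e where "e > 0" "ball w e \<subseteq> dspectrum_on M (adj T)"
proof -
  have C: "good_sub T cdual" by (rule good_cdual[OF T])
  have w': "w \<notin> dspectrum_on cdual (adj T)" using w(1) by (simp add: adj_spectrum_def)
  obtain K where K: "K > 0" "\<And>\<psi>. \<psi> \<in> cdual \<Longrightarrow> dnorm (res cdual T w \<psi>) \<le> K * dnorm \<psi>"
    using res_bound[OF good_sub_dsub[OF C] w'] by metis
  have "ball w (1 / (4 * K)) \<subseteq> dspectrum_on M (adj T)"
  proof
    fix u assume u: "u \<in> ball w (1 / (4 * K))"
    show "u \<in> dspectrum_on M (adj T)"
    proof (rule ccontr)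
      assume uM: "u \<notin> dspectrum_on M (adj T)"
      have le: "1 / (4 * K) \<le> 1 / (2 * K)" using K(1) by (intro divide_left_mono) auto
      have d: "cmod (u - w) \<le> 1 / (2 * K)" using u le by (auto simp: dist_norm norm_minus_commute)
      have uC: "u \<notin> dspectrum_on cdual (adj T)" by (rule neumann_near(1)[OF T C w' K(1) K(2) d])
      have bC: "dnorm (res cdual T u \<psi>) \<le> (2 * K) * dnorm \<psi>" if "\<psi> \<in> cdual" for \<psi>
        by (rule neumann_near(2)[OF T C w' K(1) K(2) d that])
      have bM: "dnorm (res M T u \<psi>) \<le> (2 * K) * dnorm \<psi>" if \<psi>: "\<psi> \<in> M" for \<psi>
        using res_restrict[OF T M _ uM \<psi>] uC bC[OF good_sub_V[OF M \<psi>]] by (simp add: adj_spectrum_def)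
      have d2: "cmod (w - u) \<le> 1 / (2 * (2 * K))" using u K by (auto simp: dist_norm)
      have "w \<notin> dspectrum_on M (adj T)"
        by (rule neumann_near(1)[OF T M uM _ bM d2]) (use K in simp)
      then show False using w(2) by simp
    qed
  qed
  then show ?thesis by (rule that[rotated]) (use K in auto)
qed

lemma claim_v:
  assumes T: "bounded_clinear_op T" and D: "dense_hyp T"
  shows "\<forall>M. dsubspace M \<and> dclosed M \<and> M \<noteq> {\<lambda>x. 0} \<and>
           (\<forall>\<phi>\<in>M. adj T \<phi> \<in> M) \<longrightarrow>
           adj_spectrum T \<subseteq> dspectrum_on M (adj T) \<and>
           dspectrum_on M (adj T) \<subseteq> full_spectrum (adj_spectrum T)"
proof (intro allI impI conjI)
  fix M :: "('a \<Rightarrow> complex) set"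
  assume a: "dsubspace M \<and> dclosed M \<and> M \<noteq> {\<lambda>x. 0} \<and> (\<forall>\<phi>\<in>M. adj T \<phi> \<in> M)"
  then have M: "good_sub T M" by (simp add: good_sub_def)
  obtain \<psi> where \<psi>: "\<psi> \<in> M" "\<psi> \<noteq> (\<lambda>x. 0)"
    using a dsubspace_zero[of M] by blast
  show "adj_spectrum T \<subseteq> dspectrum_on M (adj T)"
    using local_spectrum_eq[OF T D good_sub_V[OF M \<psi>(1)] \<psi>(2)] local_spectrum_subset[OF T M \<psi>(1)]
    by simp
  define S where "S = adj_spectrum T"
  define SM where "SM = dspectrum_on M (adj T)"
  have Sc: "closed S" unfolding S_def adj_spectrum_def by (rule spec_closed[OF T good_cdual[OF T]])
  have SMc: "closed SM" unfolding SM_def by (rule spec_closed[OF T M])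
  have SMb: "bounded SM" unfolding SM_def using spec_bounded[OF T M] bounded_cball bounded_subset by blast
  show "SM \<subseteq> full_spectrum S"
  proof
    fix z assume z: "z \<in> SM"
    show "z \<in> full_spectrum S"
    proof (cases "z \<in> S")
      case True then show ?thesis by (simp add: full_spectrum_def)
    next
      case False
      define C where "C = connected_component_set (- S) z"
      have Ccomp: "C \<in> components (- S)" using False by (auto simp: C_def components_iff)
      have zC: "z \<in> C" using False by (simp add: C_def)
      have Co: "open C" unfolding C_def by (rule open_connected_component) (use Sc in auto)
      have Ccon: "connected C" by (simp add: C_def)
      have CS: "C \<subseteq> - S" unfolding C_def by (rule connected_component_subset)
      have "bounded C"
      proof (rule ccontr)
        assume nb: "\<not> bounded C"
        have o1: "open (interior SM)" by simp
        have o2: "open (- SM)" using SMc by auto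
        have "C \<subseteq> interior SM \<union> - SM"
        proof
          fix w assume wC: "w \<in> C"
          show "w \<in> interior SM \<union> - SM"
          proof (cases "w \<in> SM")
            case True
            have "w \<notin> adj_spectrum T" using wC CS by (auto simp: S_def)
            then obtain e where "e > 0" "ball w e \<subseteq> SM"
              using interior_M[OF T M _ True[unfolded SM_def]] unfolding SM_def by metis
            then have "w \<in> interior SM" by (meson centre_in_ball interior_maximal open_ball subsetD)
            then show ?thesis by simp
          qed simp
        qed
        moreover have "interior SM \<inter> - SM \<inter> C = {}" using interior_subset by blast
        ultimately have "interior SM \<inter> C = {} \<or> - SM \<inter> C = {}"
          using connectedD[OF Ccon o1 o2] by blast
        moreover have "interior SM \<inter> C \<noteq> {}"
        proof -
          have "z \<notin> adj_spectrum T" using False by (simp add: S_def)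
          then obtain e where "e > 0" "ball z e \<subseteq> SM"
            using interior_M[OF T M _ z[unfolded SM_def]] unfolding SM_def by metis
          then have "z \<in> interior SM" by (meson centre_in_ball interior_maximal open_ball subsetD)
          then show ?thesis using zC by blast
        qed
        moreover have "- SM \<inter> C \<noteq> {}"
        proof
          assume "- SM \<inter> C = {}"
          then have "C \<subseteq> SM" by blast
          then have "bounded C" using SMb bounded_subset by blast
          then show False using nb by simp
        qed
        ultimately show False by blast
      qed
      then show ?thesis using Ccomp zC by (auto simp: full_spectrum_def)
    qed
  qed
qed


section \<open>Weakly analytic and locally bounded implies analytic\<close>

lemma taylor1_bound:
  fixes h :: "complex \<Rightarrow> complex"
  assumes hol: "h holomorphic_on ball z0 r" and cont: "continuous_on (cball z0 r) h"
    and r: "0 < r" and M: "\<And>w. w \<in> cball z0 r \<Longrightarrow> cmod (h w) \<le> M"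
    and w: "w \<in> cball z0 (r/2)"
  shows "cmod (h w - (h z0 + deriv h z0 * (w - z0))) \<le> (8 * M / r^2) * cmod (w - z0) ^ 2"
proof -
  define S where "S = cball z0 (r/2)"
  have Sb: "S \<subseteq> ball z0 r" using r by (auto simp: S_def)
  have der: "((deriv ^^ i) h has_field_derivative (deriv ^^ Suc i) h x) (at x within S)"
    if "x \<in> S" for i x
  proof -
    have "x \<in> ball z0 r" using that Sb by auto
    from has_field_derivative_higher_deriv[OF hol open_ball this, of i]
    show ?thesis by (rule has_field_derivative_at_within)
  qed
  have B: "cmod ((deriv ^^ Suc 1) h x) \<le> 8 * M / r^2" if x: "x \<in> S" for x
  proof -
    have dx: "dist z0 x \<le> r/2" using x by (simp add: S_def)
    have sub: "ball x (r/2) \<subseteq> ball z0 r"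
    proof
      fix u assume "u \<in> ball x (r/2)"
      then have "dist x u < r/2" by simp
      then show "u \<in> ball z0 r" using dist_triangle[of z0 u x] dx by simp
    qed
    have subc: "cball x (r/2) \<subseteq> cball z0 r"
    proof
      fix u assume "u \<in> cball x (r/2)"
      then have "dist x u \<le> r/2" by simp
      then show "u \<in> cball z0 r" using dist_triangle[of z0 u x] dx by simp
    qed
    have "cmod ((deriv ^^ 2) h x) \<le> fact 2 * M / (r/2)^2"
    proof (rule Cauchy_inequality)
      show "h holomorphic_on ball x (r/2)" by (rule holomorphic_on_subset[OF hol sub])
      show "continuous_on (cball x (r/2)) h" by (rule continuous_on_subset[OF cont subc])
      show "0 < r/2" using r by simp
      show "cmod (h u) \<le> M" if "cmod (x - u) = r/2" for u
        using M subc that by (auto simp: dist_norm)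
    qed
    then show ?thesis by (simp add: power2_eq_square numeral_eq_Suc)
  qed
  have "cmod ((deriv ^^ 0) h w - (\<Sum>i\<le>1. (deriv ^^ i) h z0 * (w - z0) ^ i / fact i))
        \<le> 8 * M / r^2 * cmod (w - z0) ^ Suc 1 / fact 1"
    by (rule field_Taylor[where S=S and f="\<lambda>i. (deriv ^^ i) h"])
       (use der B w r in \<open>auto simp: S_def\<close>)
  then show ?thesis by (simp add: power2_eq_square)
qed

lemma weak_dual_analytic:
  assumes U: "open U" and inc: "\<And>z. z \<in> U \<Longrightarrow> f z \<in> cdual"
    and hol: "\<And>x. (\<lambda>z. f z x) holomorphic_on U"
    and bnd: "\<And>z. z \<in> U \<Longrightarrow> \<exists>r>0. \<exists>M. cball z r \<subseteq> U \<and> (\<forall>w\<in>cball z r. dnorm (f w) \<le> M)"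
  shows "dual_analytic_on f U"
  unfolding dual_analytic_on_def
proof (intro conjI ballI)
  show "open U" by fact
  show "f z \<in> cdual" if "z \<in> U" for z using inc that .
  fix z0 assume z0: "z0 \<in> U"
  obtain r M where r: "r > 0" and cb: "cball z0 r \<subseteq> U" and M: "\<And>w. w \<in> cball z0 r \<Longrightarrow> dnorm (f w) \<le> M"
    using bnd[OF z0] by blast
  have M0: "0 \<le> M" using M[of z0] dnorm_nonneg[OF inc[OF z0]] r by auto
  have hb: "cmod (f w x) \<le> M * norm x" if "w \<in> cball z0 r" for w x
    using cdual_eval[OF inc, of w x] M[OF that] that cb
    by (meson mult_right_mono norm_ge_zero order_trans subsetD)
  have holb: "(\<lambda>z. f z x) holomorphic_on ball z0 r" for x
    by (rule holomorphic_on_subset[OF hol]) (use cb ball_subset_cball in blast)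
  have contb: "continuous_on (cball z0 r) (\<lambda>z. f z x)" for x
    by (rule continuous_on_subset[OF holomorphic_on_imp_continuous_on[OF hol] cb])
  have hder: "((\<lambda>z. f z x) has_field_derivative deriv (\<lambda>z. f z x) z0) (at z0)" for x
    using hol U z0 by (intro holomorphic_derivI) auto
  define G where "G x = deriv (\<lambda>z. f z x) z0" for x
  have Gc: "G \<in> cdual"
  proof (rule cdualI[where K="M / r"])
    fix x y
    have "((\<lambda>z. f z x + f z y) has_field_derivative G x + G y) (at z0)"
      unfolding G_def by (intro DERIV_add hder)
    then have "((\<lambda>z. f z (x + y)) has_field_derivative G x + G y) (at z0)"
      by (rule has_field_derivative_transform_within_open[OF _ U z0]) (simp add: cdual_add[OF inc])
    then show "G (x + y) = G x + G y" unfolding G_def using hder DERIV_unique by blast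
  next
    fix c x
    have "((\<lambda>z. c * f z x) has_field_derivative c * G x) (at z0)"
      unfolding G_def by (intro DERIV_cmult hder)
    then have "((\<lambda>z. f z (scaleC c x)) has_field_derivative c * G x) (at z0)"
      by (rule has_field_derivative_transform_within_open[OF _ U z0]) (simp add: cdualD_scaleC[OF inc])
    then show "G (scaleC c x) = c * G x" unfolding G_def using hder DERIV_unique by blast
  next
    fix x
    have "cmod ((deriv ^^ 1) (\<lambda>z. f z x) z0) \<le> fact 1 * (M * norm x) / r ^ 1"
      by (rule Cauchy_inequality[OF holb contb r]) (use hb in \<open>auto simp: dist_norm norm_minus_commute\<close>)
    then show "cmod (G x) \<le> M / r * norm x" by (simp add: G_def)
  qed
  have key: "dnorm (\<lambda>x. (f w x - f z0 x) / (w - z0) - G x) \<le> (8 * M / r^2) * cmod (w - z0)"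
    if w: "w \<in> ball z0 (r/2) - {z0}" for w
  proof (rule dnorm_le)
    show "0 \<le> 8 * M / r\<^sup>2 * cmod (w - z0)" using M0 r by simp
    fix x
    have wc: "w \<in> cball z0 (r/2)" using w by auto
    have nz: "w - z0 \<noteq> 0" using w by auto
    have t: "cmod (f w x - (f z0 x + G x * (w - z0))) \<le> (8 * (M * norm x) / r^2) * cmod (w - z0) ^ 2"
      unfolding G_def by (rule taylor1_bound[OF holb contb r hb wc])
    have "(f w x - f z0 x) / (w - z0) - G x = (f w x - (f z0 x + G x * (w - z0))) / (w - z0)"
      using nz by (simp add: field_simps)
    then have "cmod ((f w x - f z0 x) / (w - z0) - G x) = cmod (f w x - (f z0 x + G x * (w - z0))) / cmod (w - z0)"
      by (simp add: norm_divide)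
    also have "\<dots> \<le> (8 * (M * norm x) / r^2) * cmod (w - z0) ^ 2 / cmod (w - z0)"
      by (rule divide_right_mono[OF t norm_ge_zero])
    also have "\<dots> = (8 * M / r^2) * cmod (w - z0) * norm x" using nz by (simp add: power2_eq_square)
    finally show "cmod ((f w x - f z0 x) / (w - z0) - G x) \<le> 8 * M / r\<^sup>2 * cmod (w - z0) * norm x" .
  qed
  have ev: "eventually (\<lambda>w. w \<in> ball z0 (r/2) - {z0}) (at z0)"
    by (rule eventually_at_in_open) (use r in auto)
  have evU: "eventually (\<lambda>w. w \<in> U - {z0}) (at z0)" by (rule eventually_at_in_open[OF U z0])
  have "((\<lambda>w. dnorm (\<lambda>x. (f w x - f z0 x) / (w - z0) - G x)) \<longlongrightarrow> 0) (at z0)"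
  proof (rule tendsto_sandwich[where f="\<lambda>w. 0" and h="\<lambda>w. (8 * M / r^2) * cmod (w - z0)"])
    show "\<forall>\<^sub>F w in at z0. 0 \<le> dnorm (\<lambda>x. (f w x - f z0 x) / (w - z0) - G x)"
      by (rule eventually_mono[OF evU]) (auto intro!: dnorm_nonneg cdual_quot inc Gc z0)
    show "\<forall>\<^sub>F w in at z0. dnorm (\<lambda>x. (f w x - f z0 x) / (w - z0) - G x) \<le> 8 * M / r\<^sup>2 * cmod (w - z0)"
      by (rule eventually_mono[OF ev]) (rule key)
    have "((\<lambda>w. cmod (w - z0)) \<longlongrightarrow> 0) (at z0)"
      by (intro tendsto_norm_zero LIM_zero tendsto_ident_at)
    then show "((\<lambda>w. 8 * M / r\<^sup>2 * cmod (w - z0)) \<longlongrightarrow> 0) (at z0)" by (rule tendsto_mult_right_zero)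
  qed simp
  then show "\<exists>G\<in>cdual. ((\<lambda>w. dnorm (\<lambda>x. (f w x - f z0 x) / (w - z0) - G x)) \<longlongrightarrow> 0) (at z0)"
    using Gc by blast
qed


lemma apow_cdual: "bounded_clinear_op T \<Longrightarrow> \<phi> \<in> cdual \<Longrightarrow> (adj T ^^ n) \<phi> \<in> cdual"
  by (induction n) (auto intro: cdual_adj)

lemma apow_bound:
  assumes T: "bounded_clinear_op T" and \<phi>: "\<phi> \<in> cdual"
  shows "dnorm ((adj T ^^ n) \<phi>) \<le> dnorm \<phi> * onorm T ^ n"
proof (induction n)
  case 0 then show ?case by simp
next
  case (Suc n)
  have "dnorm ((adj T ^^ Suc n) \<phi>) \<le> onorm T * dnorm ((adj T ^^ n) \<phi>)"
    using dnorm_adj[OF T apow_cdual[OF T \<phi>]] by simp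
  also have "\<dots> \<le> onorm T * (dnorm \<phi> * onorm T ^ n)"
    by (rule mult_left_mono[OF Suc bcop_onorm_nonneg[OF T]])
  finally show ?case by (simp add: algebra_simps)
qed

lemma apow_shift: "(adj T ^^ n) \<phi> (T x) = (adj T ^^ Suc n) \<phi> x"
  by (simp add: adj_def)

lemma series_cdual:
  assumes c: "\<And>n. c n \<in> cdual" and b: "\<And>n. dnorm (c n) \<le> C * q ^ n" and q: "0 \<le> q" "q < 1"
  shows "(\<lambda>x. \<Sum>n. c n x) \<in> cdual" "dnorm (\<lambda>x. \<Sum>n. c n x) \<le> C / (1 - q)"
    "summable (\<lambda>n. c n x)"
proof -
  have C: "0 \<le> C" using b[of 0] dnorm_nonneg[OF c[of 0]] by simp
  have ev: "cmod (c n x) \<le> q ^ n * (C * norm x)" for n x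
  proof -
    have "cmod (c n x) \<le> dnorm (c n) * norm x" by (rule cdual_eval[OF c])
    also have "\<dots> \<le> (C * q ^ n) * norm x" by (rule mult_right_mono[OF b norm_ge_zero])
    finally show ?thesis by (simp add: algebra_simps)
  qed
  have sm: "summable (\<lambda>n. c n x)" for x by (rule series_bound(1)[OF ev q])
  then show "summable (\<lambda>n. c n x)" .
  show "(\<lambda>x. \<Sum>n. c n x) \<in> cdual"
  proof (rule cdualI[where K="C / (1 - q)"])
    fix x y
    have "(\<Sum>n. c n (x + y)) = (\<Sum>n. c n x + c n y)" using cdual_add[OF c] by simp
    also have "\<dots> = (\<Sum>n. c n x) + (\<Sum>n. c n y)" by (rule suminf_add[OF sm sm, symmetric])
    finally show "(\<Sum>n. c n (x + y)) = (\<Sum>n. c n x) + (\<Sum>n. c n y)" .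
  next
    fix d x
    have "(\<Sum>n. c n (scaleC d x)) = (\<Sum>n. d * c n x)" using cdualD_scaleC[OF c] by simp
    also have "\<dots> = d * (\<Sum>n. c n x)" by (rule suminf_mult[OF sm])
    finally show "(\<Sum>n. c n (scaleC d x)) = d * (\<Sum>n. c n x)" .
  next
    fix x
    show "cmod (\<Sum>n. c n x) \<le> C / (1 - q) * norm x"
      using series_bound(2)[OF ev q, of x] by simp
  qed
  show "dnorm (\<lambda>x. \<Sum>n. c n x) \<le> C / (1 - q)"
  proof (rule dnorm_le)
    show "0 \<le> C / (1 - q)" using C q by simp
    show "cmod (\<Sum>n. c n x) \<le> C / (1 - q) * norm x" for x
      using series_bound(2)[OF ev q, of x] by simp
  qed
qed

definition eta :: "('a::complex_banach \<Rightarrow> 'a) \<Rightarrow> ('a \<Rightarrow> complex) \<Rightarrow> complex \<Rightarrow> ('a \<Rightarrow> complex)" where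
  "eta T \<phi> z = (\<lambda>x. - (1 / z) * (\<Sum>n. (1 / z) ^ n * (adj T ^^ n) \<phi> x))"

lemma eta_props:
  assumes T: "bounded_clinear_op T" and \<phi>: "\<phi> \<in> cdual"
    and C: "\<And>n. dnorm ((adj T ^^ n) \<phi>) \<le> C * q ^ n" and q: "0 \<le> q" and z: "q < cmod z"
  shows "eta T \<phi> z \<in> cdual" "dnorm (eta T \<phi> z) \<le> C / (cmod z - q)"
    "dshift (adj T) z (eta T \<phi> z) = \<phi>"
    "summable (\<lambda>n. (1 / z) ^ n * (adj T ^^ n) \<phi> x)"
proof -
  define u where "u = 1 / z"
  have zp: "0 < cmod z" using q z by linarith
  have z0: "z \<noteq> 0" using zp by auto
  have nu: "cmod u = 1 / cmod z" by (simp add: u_def norm_divide)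
  define q' where "q' = q * cmod u"
  have q': "0 \<le> q'" "q' < 1" using q z zp by (auto simp: q'_def nu)
  define c where "c n = (\<lambda>x. u ^ n * (adj T ^^ n) \<phi> x)" for n
  have cc: "c n \<in> cdual" for n unfolding c_def by (rule cdual_cmult[OF apow_cdual[OF T \<phi>]])
  have cb: "dnorm (c n) \<le> C * q' ^ n" for n
  proof -
    have "dnorm (c n) \<le> cmod (u ^ n) * dnorm ((adj T ^^ n) \<phi>)"
      unfolding c_def by (rule dnorm_cmult[OF apow_cdual[OF T \<phi>]])
    also have "\<dots> \<le> cmod (u ^ n) * (C * q ^ n)" by (rule mult_left_mono[OF C norm_ge_zero])
    also have "\<dots> = C * q' ^ n" by (simp add: q'_def norm_power power_mult_distrib)
    finally show ?thesis .
  qed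
  note S = series_cdual[OF cc cb q']
  have e: "eta T \<phi> z = (\<lambda>x. (- u) * (\<lambda>x. \<Sum>n. c n x) x)" by (simp add: eta_def c_def u_def)
  show "eta T \<phi> z \<in> cdual" unfolding e by (rule cdual_cmult[OF S(1)])
  have "dnorm (eta T \<phi> z) \<le> cmod (- u) * dnorm (\<lambda>x. \<Sum>n. c n x)" unfolding e by (rule dnorm_cmult[OF S(1)])
  also have "\<dots> \<le> cmod u * (C / (1 - q'))" using mult_left_mono[OF S(2) norm_ge_zero[of u]] by simp
  also have "\<dots> = C / (cmod z - q)" using zp by (simp add: nu q'_def field_simps)
  finally show "dnorm (eta T \<phi> z) \<le> C / (cmod z - q)" .
  show sm: "summable (\<lambda>n. (1 / z) ^ n * (adj T ^^ n) \<phi> x)" for x using S(3)[of x] by (simp add: c_def u_def)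
  show "dshift (adj T) z (eta T \<phi> z) = \<phi>"
  proof
    fix x
    define a where "a n = (adj T ^^ n) \<phi> x" for n
    have s1: "summable (\<lambda>n. u ^ n * a n)" using sm[of x] by (simp add: a_def u_def)
    have s2: "summable (\<lambda>n. u ^ Suc n * a (Suc n))"
      using summable_Suc_iff[of "\<lambda>n. u ^ n * a n"] s1 by (simp only:)
    have split: "(\<Sum>n. u ^ n * a n) = a 0 + u * (\<Sum>n. u ^ n * a (Suc n))"
    proof -
      have "(\<Sum>n. u ^ Suc n * a (Suc n)) = (\<Sum>n. u ^ n * a n) - u ^ 0 * a 0"
        by (rule suminf_split_head[OF s1])
      moreover have "(\<Sum>n. u ^ Suc n * a (Suc n)) = u * (\<Sum>n. u ^ n * a (Suc n))"
      proof -
        have s3: "summable (\<lambda>n. u ^ n * a (Suc n))"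
        proof -
          have False: "u \<noteq> 0" using z0 by (simp add: u_def)
          have "summable (\<lambda>n. inverse u * (u ^ Suc n * a (Suc n)))" by (rule summable_mult[OF s2])
          then show ?thesis using False by (simp add: field_simps)
        qed
        have "(\<Sum>n. u ^ Suc n * a (Suc n)) = (\<Sum>n. u * (u ^ n * a (Suc n)))" by (simp add: mult.assoc)
        also have "\<dots> = u * (\<Sum>n. u ^ n * a (Suc n))" by (rule suminf_mult[OF s3])
        finally show ?thesis .
      qed
      ultimately have "(\<Sum>n. u ^ n * a n) - a 0 = u * (\<Sum>n. u ^ n * a (Suc n))" by simp
      then show ?thesis by (simp add: diff_eq_eq add.commute)
    qed
    have ev: "eta T \<phi> z y = - u * (\<Sum>n. u ^ n * (adj T ^^ n) \<phi> y)" for y by (simp add: eta_def u_def)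
    have "dshift (adj T) z (eta T \<phi> z) x = - u * (\<Sum>n. u ^ n * a (Suc n)) - z * (- u * (\<Sum>n. u ^ n * a n))"
      by (simp add: dshift_apply ev apow_shift a_def)
    also have "\<dots> = - u * (\<Sum>n. u ^ n * a (Suc n)) + (\<Sum>n. u ^ n * a n)"
      using z0 by (simp add: u_def)
    also have "\<dots> = a 0" by (simp add: split)
    finally show "dshift (adj T) z (eta T \<phi> z) x = \<phi> x" by (simp add: a_def)
  qed
qed

lemma eta_onorm:
  assumes T: "bounded_clinear_op T" and \<phi>: "\<phi> \<in> cdual"
  shows "\<And>n. dnorm ((adj T ^^ n) \<phi>) \<le> dnorm \<phi> * (onorm T) ^ n"
  using apow_bound[OF T \<phi>] by simp

section \<open>Nonempty spectrum\<close>

lemma spectrum_nonempty: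
  fixes T :: "'a::complex_banach \<Rightarrow> 'a" and \<phi> :: "'a \<Rightarrow> complex"
  assumes T: "bounded_clinear_op T" and D: "dense_hyp T" and \<phi>: "\<phi> \<in> cdual" and nz: "\<phi> \<noteq> (\<lambda>x. 0)"
  shows "adj_spectrum T \<noteq> {}"
proof
  assume e: "adj_spectrum T = {}"
  have "adj_local_spectrum T \<phi> = {}" using local_spectrum_eq[OF T D \<phi> nz] e by simp
  then have "\<phi> \<in> adj_glocal_subspace T {}" using glue[OF T D \<phi>] by simp
  then obtain g where g: "dual_analytic_on g UNIV" and geq: "\<And>z. dshift (adj T) z (g z) = \<phi>"
    by (auto simp: adj_glocal_subspace_def)
  have nsp: "z \<notin> dspectrum_on cdual (adj T)" for z using e by (simp add: adj_spectrum_def)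
  have "g z x = 0" for z x
  proof -
    have hol: "(\<lambda>z. g z x) holomorphic_on UNIV" by (rule dual_analytic_holo[OF g])
    have lim: "((\<lambda>z. g z x) \<longlongrightarrow> 0) at_infinity"
    proof (rule at_infinity_decay[where Bb="onorm T + 1" and K="onorm T" and C="dnorm \<phi> * norm x"])
      fix w :: complex assume w: "onorm T + 1 \<le> cmod w"
      have wq: "onorm T < cmod w" using w by simp
      have ge: "g w = eta T \<phi> w"
        by (rule shift_inj[OF nsp[of w] dual_analytic_in[OF g, of w] eta_props(1)[OF T \<phi> eta_onorm[OF T \<phi>] bcop_onorm_nonneg[OF T] wq]])
           (simp_all add: geq eta_props(3)[OF T \<phi> eta_onorm[OF T \<phi>] bcop_onorm_nonneg[OF T] wq])
      have "cmod (g w x) \<le> dnorm (g w) * norm x" by (rule cdual_eval[OF dual_analytic_in[OF g]]) simp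
      also have "\<dots> \<le> (dnorm \<phi> / (cmod w - onorm T)) * norm x"
        unfolding ge by (rule mult_right_mono[OF eta_props(2)[OF T \<phi> eta_onorm[OF T \<phi>] bcop_onorm_nonneg[OF T] wq] norm_ge_zero])
      finally show "cmod (g w x) \<le> dnorm \<phi> * norm x / (cmod w - onorm T)" by simp
    qed (simp_all add: dnorm_nonneg[OF \<phi>])
    show ?thesis by (rule Liouville_weak[OF hol lim])
  qed
  then have "g 0 = (\<lambda>x. 0)" by auto
  then have "\<phi> = (\<lambda>x. 0)" using geq[of 0] by simp
  then show False using nz by simp
qed


lemma open_outside: "open {z::complex. q < cmod z}"
  by (rule open_Collect_less) (auto intro: continuous_intros)

lemma eta_holo:
  assumes T: "bounded_clinear_op T" and \<phi>: "\<phi> \<in> cdual"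
    and C: "\<And>n. dnorm ((adj T ^^ n) \<phi>) \<le> C * q ^ n" and q: "0 < q"
  shows "(\<lambda>z. eta T \<phi> z x) holomorphic_on {z. q < cmod z}"
proof -
  define a where "a n = (adj T ^^ n) \<phi> x" for n
  have ab: "cmod (a n) \<le> q ^ n * (C * norm x)" for n
  proof -
    have "cmod (a n) \<le> dnorm ((adj T ^^ n) \<phi>) * norm x" unfolding a_def by (rule cdual_eval[OF apow_cdual[OF T \<phi>]])
    also have "\<dots> \<le> (C * q ^ n) * norm x" by (rule mult_right_mono[OF C norm_ge_zero])
    finally show ?thesis by (simp add: algebra_simps)
  qed
  define P where "P w = (\<Sum>n. a n * w ^ n)" for w
  have Ps: "(\<lambda>n. a n * (w - 0) ^ n) sums P w" if w: "w \<in> ball 0 (1 / q)" for w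
  proof -
    have qw: "q * cmod w < 1" using w q by (simp add: field_simps)
    have "summable (\<lambda>n. a n * w ^ n)"
    proof (rule series_bound(1)[where q="q * cmod w" and c="C * norm x"])
      show "cmod (a n * w ^ n) \<le> (q * cmod w) ^ n * (C * norm x)" for n
        using mult_right_mono[OF ab[of n], of "cmod w ^ n"]
        by (simp add: norm_mult norm_power power_mult_distrib algebra_simps)
    qed (use qw q in auto)
    then show ?thesis by (simp add: P_def summable_sums)
  qed
  have Ph: "P holomorphic_on ball 0 (1 / q)" by (rule power_series_holomorphic[OF Ps])
  have inv: "(\<lambda>z. 1 / z) holomorphic_on {z. q < cmod z}"
    by (rule holomorphic_on_divide) (use q in \<open>auto intro: holomorphic_intros\<close>)
  have img: "(\<lambda>z. 1 / z) ` {z. q < cmod z} \<subseteq> ball 0 (1 / q)"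
  proof
    fix y assume "y \<in> (\<lambda>z. 1 / z) ` {z. q < cmod z}"
    then obtain z where z: "q < cmod z" "y = 1 / z" by auto
    have zp: "0 < cmod z" using z q by linarith
    have "1 / cmod z < 1 / q" by (rule divide_strict_left_mono) (use z q zp in auto)
    then show "y \<in> ball 0 (1 / q)" using z by (simp add: norm_divide)
  qed
  have "(P \<circ> (\<lambda>z. 1 / z)) holomorphic_on {z. q < cmod z}"
    by (rule holomorphic_on_compose_gen[OF inv Ph img])
  then have h: "(\<lambda>z. - (1 / z) * P (1 / z)) holomorphic_on {z. q < cmod z}"
    by (intro holomorphic_on_mult holomorphic_on_minus inv) (simp add: o_def)
  show ?thesis
  proof (rule holomorphic_transform[OF h])
    fix z show "- (1 / z) * P (1 / z) = eta T \<phi> z x"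
      by (simp add: eta_def P_def a_def mult.commute)
  qed
qed

lemma eta_loc_sol:
  assumes T: "bounded_clinear_op T" and \<phi>: "\<phi> \<in> cdual"
    and C: "\<And>n. dnorm ((adj T ^^ n) \<phi>) \<le> C * q ^ n" and q: "0 < q"
  shows "loc_sol T \<phi> {z. q < cmod z} (eta T \<phi>)"
  unfolding loc_sol_def
proof
  have q0: "0 \<le> q" using q by simp
  show "dual_analytic_on (eta T \<phi>) {z. q < cmod z}"
  proof (rule weak_dual_analytic[OF open_outside])
    show "eta T \<phi> z \<in> cdual" if "z \<in> {z. q < cmod z}" for z
      using eta_props(1)[OF T \<phi> C q0] that by simp
    show "(\<lambda>z. eta T \<phi> z x) holomorphic_on {z. q < cmod z}" for x by (rule eta_holo[OF T \<phi> C q])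
    fix z0 assume z0: "z0 \<in> {z. q < cmod z}"
    define r where "r = (cmod z0 - q) / 2"
    have r: "r > 0" using z0 by (simp add: r_def)
    have far: "q + r \<le> cmod w" if "w \<in> cball z0 r" for w
    proof -
      have "cmod (z0 - w) \<le> r" using that by (simp add: dist_norm)
      moreover have "cmod z0 - cmod w \<le> cmod (z0 - w)" by (rule norm_triangle_ineq2)
      moreover have "2 * r = cmod z0 - q" by (simp add: r_def)
      ultimately show ?thesis by linarith
    qed
    show "\<exists>r>0. \<exists>M. cball z0 r \<subseteq> {z. q < cmod z} \<and> (\<forall>w\<in>cball z0 r. dnorm (eta T \<phi> w) \<le> M)"
    proof (intro exI conjI ballI)
      show "r > 0" by fact
      show "cball z0 r \<subseteq> {z. q < cmod z}" using far r by fastforce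
      fix w assume w: "w \<in> cball z0 r"
      have wq: "q < cmod w" using far[OF w] r by simp
      have C0: "0 \<le> C" using C[of 0] dnorm_nonneg[OF \<phi>] by simp
      have "dnorm (eta T \<phi> w) \<le> C / (cmod w - q)" by (rule eta_props(2)[OF T \<phi> C q0 wq])
      also have "\<dots> \<le> C / r" using far[OF w] r C0 by (intro divide_left_mono) auto
      finally show "dnorm (eta T \<phi> w) \<le> C / r" .
    qed
  qed
  show "\<forall>z\<in>{z. q < cmod z}. dshift (adj T) z (eta T \<phi> z) = \<phi>"
    using eta_props(3)[OF T \<phi> C q0] by auto
qed

lemma lower_point:
  fixes T :: "'a::complex_banach \<Rightarrow> 'a" and \<phi> :: "'a \<Rightarrow> complex"
  assumes T: "bounded_clinear_op T" and D: "dense_hyp T" and \<phi>: "\<phi> \<in> cdual" and nz: "\<phi> \<noteq> (\<lambda>x. 0)"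
    and mu: "\<mu> \<in> adj_spectrum T"
  shows "ereal (cmod \<mu>) \<le> adj_local_spectral_radius T \<phi>"
proof (rule ccontr)
  define d where "d n = dnorm ((adj T ^^ n) \<phi>)" for n
  have d0: "0 \<le> d n" for n unfolding d_def by (rule dnorm_nonneg[OF apow_cdual[OF T \<phi>]])
  assume "\<not> ereal (cmod \<mu>) \<le> adj_local_spectral_radius T \<phi>"
  then have "adj_local_spectral_radius T \<phi> < ereal (cmod \<mu>)" by simp
  then obtain q where q1: "adj_local_spectral_radius T \<phi> < ereal q" and q2: "ereal q < ereal (cmod \<mu>)"
    using ereal_dense2 by blast
  have "eventually (\<lambda>n. ereal (root n (d n)) < ereal q) sequentially"
    by (rule Limsup_lessD) (use q1 in \<open>simp add: adj_local_spectral_radius_def d_def\<close>)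
  then obtain N where N: "\<And>n. n \<ge> N \<Longrightarrow> root n (d n) < q"
    by (auto simp: eventually_sequentially)
  define N' where "N' = Suc N"
  have r0: "0 \<le> root N' (d N')" by (rule real_root_ge_zero[OF d0])
  have r1: "root N' (d N') < q" by (rule N) (simp add: N'_def)
  have qpos: "0 < q" using r0 r1 by linarith
  have big: "d n \<le> q ^ n" if "n \<ge> N'" for n
  proof -
    have n0: "0 < n" using that by (simp add: N'_def)
    have "root n (d n) < root n (q ^ n)"
      using N[of n] that real_root_power_cancel[OF n0, of q] qpos by (simp add: N'_def)
    then show ?thesis using n0 by simp
  qed
  define C where "C = 1 + (\<Sum>k<N'. d k / q ^ k)"
  have C1: "1 \<le> C" unfolding C_def using d0 qpos by (simp add: sum_nonneg)
  have Cb: "dnorm ((adj T ^^ n) \<phi>) \<le> C * q ^ n" for n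
  proof (cases "n < N'")
    case True
    have "d n / q ^ n \<le> (\<Sum>k<N'. d k / q ^ k)"
      by (rule member_le_sum) (use True d0 qpos in auto)
    then have "d n / q ^ n \<le> C" by (simp add: C_def)
    then show ?thesis using qpos by (simp add: d_def pos_divide_le_eq)
  next
    case False
    then have "d n \<le> q ^ n" using big by simp
    also have "\<dots> \<le> C * q ^ n" using C1 qpos by simp
    finally show ?thesis by (simp add: d_def)
  qed
  have "{z. q < cmod z} \<subseteq> adj_local_resolvent T \<phi>"
    by (rule local_resolventI[OF eta_loc_sol[OF T \<phi> Cb qpos]])
  moreover have "q < cmod \<mu>" using q2 by simp
  ultimately have "\<mu> \<notin> adj_local_spectrum T \<phi>" by (auto simp: adj_local_spectrum_def)
  then show False using local_spectrum_eq[OF T D \<phi> nz] mu by simp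
qed

lemma spec_bdd:
  assumes T: "bounded_clinear_op T"
  shows "\<And>\<mu>. \<mu> \<in> adj_spectrum T \<Longrightarrow> cmod \<mu> \<le> onorm T" "bdd_above (cmod ` adj_spectrum T)"
proof -
  show b: "cmod \<mu> \<le> onorm T" if "\<mu> \<in> adj_spectrum T" for \<mu>
    using spec_bounded[OF T good_cdual[OF T]] that by (auto simp: adj_spectrum_def)
  show "bdd_above (cmod ` adj_spectrum T)" by (rule bdd_aboveI2) (rule b)
qed

lemma lower_radius:
  fixes T :: "'a::complex_banach \<Rightarrow> 'a" and \<phi> :: "'a \<Rightarrow> complex"
  assumes T: "bounded_clinear_op T" and D: "dense_hyp T" and \<phi>: "\<phi> \<in> cdual" and nz: "\<phi> \<noteq> (\<lambda>x. 0)"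
  shows "ereal (adj_spectral_radius T) \<le> adj_local_spectral_radius T \<phi>"
proof -
  have ne: "adj_spectrum T \<noteq> {}" by (rule spectrum_nonempty[OF T D \<phi> nz])
  then obtain \<mu> where mu: "\<mu> \<in> adj_spectrum T" by blast
  have pts: "ereal (cmod \<nu>) \<le> adj_local_spectral_radius T \<phi>" if "\<nu> \<in> adj_spectrum T" for \<nu>
    by (rule lower_point[OF T D \<phi> nz that])
  show ?thesis
  proof (cases "adj_local_spectral_radius T \<phi>")
    case (real l)
    have "Sup (cmod ` adj_spectrum T) \<le> l"
      by (rule cSup_least) (use ne pts real in auto)
    then show ?thesis using real by (simp add: adj_spectral_radius_def)
  next
    case PInf then show ?thesis by simp
  next
    case MInf then show ?thesis using pts[OF mu] by simp
  qed
qed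


lemma res_local:
  assumes T: "bounded_clinear_op T" and \<phi>: "\<phi> \<in> cdual" and z: "z \<notin> adj_spectrum T"
  obtains \<delta> where "\<delta> > 0" "loc_sol T \<phi> (ball z \<delta>) (\<lambda>w. res cdual T w \<phi>)"
proof -
  have C: "good_sub T cdual" by (rule good_cdual[OF T])
  have z': "z \<notin> dspectrum_on cdual (adj T)" using z by (simp add: adj_spectrum_def)
  obtain K where K: "K > 0" "\<And>\<psi>. \<psi> \<in> cdual \<Longrightarrow> dnorm (res cdual T z \<psi>) \<le> K * dnorm \<psi>"
    using res_bound[OF good_sub_dsub[OF C] z'] by metis
  show ?thesis by (rule that[OF _ res_analytic[OF T C z' K \<phi>]]) (use K in simp)
qed

lemma open_resolvent: "bounded_clinear_op T \<Longrightarrow> open (- adj_spectrum T)"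
  using spec_closed[OF _ good_cdual] by (auto simp: adj_spectrum_def)

lemma res_holo:
  assumes T: "bounded_clinear_op T" and \<phi>: "\<phi> \<in> cdual"
  shows "(\<lambda>z. res cdual T z \<phi> x) holomorphic_on (- adj_spectrum T)"
  unfolding holomorphic_on_open[OF open_resolvent[OF T]]
proof
  fix z assume z: "z \<in> - adj_spectrum T"
  obtain \<delta> where d: "\<delta> > 0" "loc_sol T \<phi> (ball z \<delta>) (\<lambda>w. res cdual T w \<phi>)"
    using res_local[OF T \<phi>] z by blast
  have "(\<lambda>w. res cdual T w \<phi> x) holomorphic_on ball z \<delta>"
    by (rule dual_analytic_holo) (use d in \<open>simp add: loc_sol_def\<close>)
  then have "((\<lambda>w. res cdual T w \<phi> x) has_field_derivative deriv (\<lambda>w. res cdual T w \<phi> x) z) (at z)"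
    using d(1) by (intro holomorphic_derivI) auto
  then show "\<exists>f'. ((\<lambda>w. res cdual T w \<phi> x) has_field_derivative f') (at z)" ..
qed

lemma res_dnorm_cont:
  assumes T: "bounded_clinear_op T" and \<phi>: "\<phi> \<in> cdual"
  shows "continuous_on (- adj_spectrum T) (\<lambda>z. dnorm (res cdual T z \<phi>))"
  unfolding continuous_on_eq_continuous_at[OF open_resolvent[OF T]]
proof
  fix z assume z: "z \<in> - adj_spectrum T"
  obtain \<delta> where d: "\<delta> > 0" "loc_sol T \<phi> (ball z \<delta>) (\<lambda>w. res cdual T w \<phi>)"
    using res_local[OF T \<phi>] z by blast
  have "continuous_on (ball z \<delta>) (\<lambda>w. dnorm (res cdual T w \<phi>))"
    by (rule dual_analytic_dnorm_continuous_on) (use d in \<open>simp add: loc_sol_def\<close>)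
  then show "isCont (\<lambda>w. dnorm (res cdual T w \<phi>)) z"
    using d(1) by (simp add: continuous_on_eq_continuous_at)
qed

lemma coef_bound:
  fixes T :: "'a::complex_banach \<Rightarrow> 'a" and \<phi> :: "'a \<Rightarrow> complex"
  assumes T: "bounded_clinear_op T" and \<phi>: "\<phi> \<in> cdual"
    and r0: "0 \<le> r" and outside: "\<And>z. r < cmod z \<Longrightarrow> z \<notin> adj_spectrum T"
    and rT: "r \<le> onorm T"
    and rho: "r < \<rho>" and M: "\<And>z. cmod z = \<rho> \<Longrightarrow> dnorm (res cdual T z \<phi>) \<le> M"
  shows "cmod ((adj T ^^ n) \<phi> x) \<le> M * norm x * \<rho> ^ Suc n"
proof -
  define a where "a n = (adj T ^^ n) \<phi> x" for n
  define q0 where "q0 = onorm T + 1"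
  have q0: "0 < q0" "onorm T < q0" using bcop_onorm_nonneg[OF T] by (auto simp: q0_def)
  have C0: "dnorm ((adj T ^^ n) \<phi>) \<le> dnorm \<phi> * q0 ^ n" for n
  proof -
    have "dnorm ((adj T ^^ n) \<phi>) \<le> dnorm \<phi> * onorm T ^ n" by (rule apow_bound[OF T \<phi>])
    also have "\<dots> \<le> dnorm \<phi> * q0 ^ n"
      by (rule mult_left_mono[OF power_mono dnorm_nonneg[OF \<phi>]]) (use q0 bcop_onorm_nonneg[OF T] in auto)
    finally show ?thesis .
  qed
  have rhop: "0 < \<rho>" using r0 rho by linarith
  define R0 where "R0 = 2 / (r + \<rho>)"
  define s where "s = 1 / \<rho>"
  have R0: "0 < R0" using r0 rhop by (simp add: R0_def)
  have s: "0 < s" "s < R0" using r0 rho rhop by (auto simp: s_def R0_def field_simps)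
  define k where "k u = (if u = 0 then 0 else res cdual T (1 / u) \<phi> x)" for u
  define coef where "coef n = (if n = 0 then 0 else - a (n - 1))" for n
  have nsp: "z \<notin> dspectrum_on cdual (adj T)" if "r < cmod z" for z
    using outside[OF that] by (simp add: adj_spectrum_def)
  have near: "(\<lambda>n. coef n * (u - 0) ^ n) sums k u" if u: "u \<in> ball 0 (1 / q0)" for u
  proof (cases "u = 0")
    case True
    then show ?thesis using powser_sums_zero[of coef] by (simp add: k_def coef_def)
  next
    case False
    define z where "z = 1 / u"
    have zu: "u = 1 / z" using False by (simp add: z_def)
    have zq: "q0 < cmod z"
    proof -
      have "cmod u < 1 / q0" using u by simp
      then have "cmod u * q0 < 1" using q0 by (simp add: field_simps)
      then show ?thesis using False q0 by (simp add: z_def norm_divide field_simps)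
    qed
    have zr: "r < cmod z" using zq rT q0 by linarith
    have e: "res cdual T z \<phi> = eta T \<phi> z"
      by (rule res_unique[OF nsp[OF zr] \<phi> eta_props(1,3)[OF T \<phi> C0 _ zq]]) (use q0 in auto)
    have sm: "summable (\<lambda>n. u ^ n * a n)"
      using eta_props(4)[OF T \<phi> C0 _ zq, of x] q0 by (simp add: a_def zu)
    have "(\<lambda>n. - u * (u ^ n * a n)) sums (- u * (\<Sum>n. u ^ n * a n))"
      by (rule sums_mult[OF summable_sums[OF sm]])
    moreover have "(\<lambda>n. coef (Suc n) * u ^ Suc n) = (\<lambda>n. - u * (u ^ n * a n))"
      by (simp add: coef_def fun_eq_iff algebra_simps)
    ultimately have "(\<lambda>n. coef (Suc n) * u ^ Suc n) sums (- u * (\<Sum>n. u ^ n * a n))" by simp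
    then have "(\<lambda>n. coef n * u ^ n) sums (- u * (\<Sum>n. u ^ n * a n) + coef 0 * u ^ 0)"
      by (subst sums_Suc_iff[symmetric]) simp
    moreover have "k u = - u * (\<Sum>n. u ^ n * a n)"
      using False by (simp add: k_def e eta_def a_def zu)
    ultimately show ?thesis by (simp add: coef_def)
  qed
  have hol1: "k holomorphic_on ball 0 (1 / q0)"
    by (rule power_series_holomorphic[OF near])
  have hol2: "k holomorphic_on (ball 0 R0 - {0})"
  proof -
    have inv: "(\<lambda>u. 1 / u) holomorphic_on (ball 0 R0 - {0})"
      by (rule holomorphic_on_divide) (auto intro: holomorphic_intros)
    have img: "(\<lambda>u. 1 / u) ` (ball 0 R0 - {0}) \<subseteq> - adj_spectrum T"
    proof
      fix y :: complex assume "y \<in> (\<lambda>u. 1 / u) ` (ball 0 R0 - {0})"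
      then obtain u where u': "u \<in> ball 0 R0 - {0}" "y = 1 / u" by blast
      then have u: "u \<in> ball 0 R0" "u \<noteq> 0" "y = 1 / u" by auto
      have "cmod u < R0" using u by simp
      then have "1 / R0 < 1 / cmod u" using u R0 by (intro divide_strict_left_mono) auto
      moreover have "1 / R0 = (r + \<rho>) / 2" by (simp add: R0_def)
      ultimately have "r < cmod y" using u rho by (simp add: norm_divide)
      then show "y \<in> - adj_spectrum T" using outside by auto
    qed
    have "((\<lambda>z. res cdual T z \<phi> x) \<circ> (\<lambda>u. 1 / u)) holomorphic_on (ball 0 R0 - {0})"
      by (rule holomorphic_on_compose_gen[OF inv res_holo[OF T \<phi>] img])
    then show ?thesis by (rule holomorphic_transform) (simp add: k_def)
  qed
  have hol: "k holomorphic_on ball 0 R0"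
  proof -
    have "k holomorphic_on ((ball 0 R0 - {0}) \<union> ball 0 (1 / q0))"
      by (rule holomorphic_on_Un[OF hol2 hol1]) auto
    then show ?thesis by (rule holomorphic_on_subset) (use q0 in auto)
  qed
  define F where "F = Abs_fps coef"
  have Fn: "fps_nth F = coef" by (simp add: F_def fun_eq_iff)
  have exp: "k has_fps_expansion F"
    unfolding has_fps_expansion_def
  proof
    define u0 :: complex where "u0 = of_real (1 / (2 * q0))"
    have u0n: "norm u0 = 1 / (2 * q0)" using q0 by (simp add: u0_def norm_divide norm_mult)
    have "(\<lambda>n. coef n * (u0 - 0) ^ n) sums k u0"
      by (rule near) (use q0 u0n in \<open>simp add: field_simps\<close>)
    then have "summable (\<lambda>n. coef n * u0 ^ n)" by (simp add: sums_summable)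
    then have "norm u0 \<le> conv_radius coef" by (rule conv_radius_geI)
    moreover have "0 < norm u0" using q0 u0n by simp
    ultimately show "0 < fps_conv_radius F" unfolding fps_conv_radius_def Fn
      by (metis ereal_less(2) order_less_le_trans zero_ereal_def)
    have "eventually (\<lambda>u. u \<in> ball 0 (1 / q0)) (nhds 0)"
      by (rule eventually_nhds_in_open) (use q0 in auto)
    then show "eventually (\<lambda>u. eval_fps F u = k u) (nhds 0)"
    proof (rule eventually_mono)
      fix u :: complex assume "u \<in> ball 0 (1 / q0)"
      from near[OF this] show "eval_fps F u = k u" by (simp add: eval_fps_def Fn sums_iff)
    qed
  qed
  have cn: "coef (Suc n) = (deriv ^^ Suc n) k 0 / fact (Suc n)"
    using fps_nth_fps_expansion[OF exp, of "Suc n"] by (simp add: Fn)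
  have cb: "cmod ((deriv ^^ Suc n) k 0) \<le> fact (Suc n) * (M * norm x) / s ^ Suc n"
  proof (rule Cauchy_inequality)
    show "k holomorphic_on ball 0 s" by (rule holomorphic_on_subset[OF hol]) (use s in auto)
    show "continuous_on (cball 0 s) k"
      by (rule continuous_on_subset[OF holomorphic_on_imp_continuous_on[OF hol]]) (use s in auto)
    show "0 < s" by fact
    fix u :: complex assume u: "cmod (0 - u) = s"
    then have u0: "u \<noteq> 0" using s by auto
    have nu: "cmod (1 / u) = \<rho>" using u rhop by (simp add: norm_divide s_def)
    have "cmod (k u) = cmod (res cdual T (1 / u) \<phi> x)" using u0 by (simp add: k_def)
    also have "\<dots> \<le> dnorm (res cdual T (1 / u) \<phi>) * norm x"
      by (rule cdual_eval[OF res_props(1)[OF nsp \<phi>]]) (use nu rho in simp)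
    also have "\<dots> \<le> M * norm x" by (rule mult_right_mono[OF M[OF nu] norm_ge_zero])
    finally show "cmod (k u) \<le> M * norm x" .
  qed
  have e0: "- a n = (deriv ^^ Suc n) k 0 / fact (Suc n)"
    using cn by (simp add: coef_def)
  have e: "a n = - ((deriv ^^ Suc n) k 0 / fact (Suc n))"
    unfolding e0[symmetric] by simp
  have "cmod (a n) = cmod ((deriv ^^ Suc n) k 0) / fact (Suc n)"
  proof -
    have nf: "cmod (fact (Suc n) :: complex) = fact (Suc n)"
      by (metis norm_of_nat of_nat_fact)
    show ?thesis unfolding e norm_minus_cancel norm_divide nf by simp
  qed
  also have "\<dots> \<le> (fact (Suc n) * (M * norm x) / s ^ Suc n) / fact (Suc n)"
    by (rule divide_right_mono[OF cb]) simp
  also have "\<dots> = M * norm x * \<rho> ^ Suc n" by (simp add: s_def power_one_over)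
  finally show ?thesis by (simp add: a_def)
qed


lemma upper_radius:
  fixes T :: "'a::complex_banach \<Rightarrow> 'a" and \<phi> :: "'a \<Rightarrow> complex"
  assumes T: "bounded_clinear_op T" and D: "dense_hyp T" and \<phi>: "\<phi> \<in> cdual" and nz: "\<phi> \<noteq> (\<lambda>x. 0)"
  shows "adj_local_spectral_radius T \<phi> \<le> ereal (adj_spectral_radius T)"
proof -
  define r where "r = adj_spectral_radius T"
  have ne: "adj_spectrum T \<noteq> {}" by (rule spectrum_nonempty[OF T D \<phi> nz])
  then obtain \<mu> where mu: "\<mu> \<in> adj_spectrum T" by blast
  have bdd: "bdd_above (cmod ` adj_spectrum T)" by (rule spec_bdd(2)[OF T])
  have up: "cmod z \<le> r" if "z \<in> adj_spectrum T" for z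
    unfolding r_def adj_spectral_radius_def by (rule cSup_upper[OF _ bdd]) (use that in auto)
  have r0: "0 \<le> r" using up[OF mu] norm_ge_zero[of \<mu>] by linarith
  have rT: "r \<le> onorm T"
    unfolding r_def adj_spectral_radius_def by (rule cSup_least) (use ne spec_bdd(1)[OF T] in auto)
  have outside: "z \<notin> adj_spectrum T" if "r < cmod z" for z using up that by fastforce
  have main: "adj_local_spectral_radius T \<phi> \<le> ereal \<rho>" if rho: "r < \<rho>" for \<rho>
  proof -
    have rhop: "0 < \<rho>" using r0 rho by linarith
    have sph: "sphere 0 \<rho> \<subseteq> - adj_spectrum T" using outside rho by auto
    have "compact ((\<lambda>z. dnorm (res cdual T z \<phi>)) ` sphere 0 \<rho>)"
      by (rule compact_continuous_image[OF continuous_on_subset[OF res_dnorm_cont[OF T \<phi>] sph]]) simp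
    then have "bounded ((\<lambda>z. dnorm (res cdual T z \<phi>)) ` sphere 0 \<rho>)" by (rule compact_imp_bounded)
    then obtain M0 where M0: "\<forall>z\<in>sphere 0 \<rho>. norm (dnorm (res cdual T z \<phi>)) \<le> M0"
      unfolding bounded_iff by blast
    define M where "M = max M0 1"
    have Mp: "0 < M" by (simp add: M_def)
    have Mb: "dnorm (res cdual T z \<phi>) \<le> M" if "cmod z = \<rho>" for z
    proof -
      have "z \<in> sphere 0 \<rho>" using that by simp
      then have "norm (dnorm (res cdual T z \<phi>)) \<le> M0" using M0 by blast
      then show ?thesis by (simp add: M_def)
    qed
    define d where "d n = dnorm ((adj T ^^ n) \<phi>)" for n
    have d0: "0 \<le> d n" for n unfolding d_def by (rule dnorm_nonneg[OF apow_cdual[OF T \<phi>]])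
    have db: "d n \<le> M * \<rho> ^ Suc n" for n
      unfolding d_def
    proof (rule dnorm_le)
      show "0 \<le> M * \<rho> ^ Suc n" using Mp rhop by simp
      show "cmod ((adj T ^^ n) \<phi> x) \<le> M * \<rho> ^ Suc n * norm x" for x
        using coef_bound[OF T \<phi> r0 outside rT rho Mb, of n x] by (simp add: algebra_simps)
    qed
    have ev: "eventually (\<lambda>n. ereal (root n (d n)) \<le> ereal (root n (M * \<rho>) * \<rho>)) sequentially"
    proof (rule eventually_sequentiallyI[of 1])
      fix n :: nat assume n: "1 \<le> n"
      then have n0: "0 < n" by simp
      have "root n (d n) \<le> root n (M * \<rho> ^ Suc n)" using db[of n] n0 by simp
      also have "M * \<rho> ^ Suc n = (M * \<rho>) * \<rho> ^ n" by simp
      also have "root n \<dots> = root n (M * \<rho>) * \<rho>"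
        using real_root_power_cancel[OF n0, of \<rho>] rhop by (simp add: real_root_mult)
      finally show "ereal (root n (d n)) \<le> ereal (root n (M * \<rho>) * \<rho>)" by simp
    qed
    have "(\<lambda>n. root n (M * \<rho>) * \<rho>) \<longlonglongrightarrow> 1 * \<rho>"
      by (intro tendsto_mult LIMSEQ_root_const tendsto_const) (use Mp rhop in simp)
    then have lim: "(\<lambda>n. ereal (root n (M * \<rho>) * \<rho>)) \<longlonglongrightarrow> ereal \<rho>" by simp
    have "adj_local_spectral_radius T \<phi> = limsup (\<lambda>n. ereal (root n (d n)))"
      by (simp add: adj_local_spectral_radius_def d_def)
    also have "\<dots> \<le> limsup (\<lambda>n. ereal (root n (M * \<rho>) * \<rho>))" by (rule Limsup_mono[OF ev])
    also have "\<dots> = ereal \<rho>" by (rule lim_imp_Limsup[OF trivial_limit_sequentially lim])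
    finally show ?thesis .
  qed
  show ?thesis unfolding r_def[symmetric]
  proof (rule dense_ge)
    fix y assume y: "ereal r < y"
    show "adj_local_spectral_radius T \<phi> \<le> y"
    proof (cases y)
      case (real \<rho>) then show ?thesis using main y by simp
    next
      case PInf then show ?thesis by simp
    next
      case MInf then show ?thesis using y by simp
    qed
  qed
qed

theorem theorem2p1:
  fixes T :: "'a::complex_banach \<Rightarrow> 'a"
  assumes T: "bounded_clinear_op T"
    and dense: "\<And>U. U \<noteq> {} \<Longrightarrow> openin (top_of_set (op_spectrum T)) U \<Longrightarrow>
                  closure (glocal_subspace T (closure U)) = UNIV"
  shows "(\<forall>F. closed F \<and> F \<subset> adj_spectrum T \<longrightarrow> adj_glocal_subspace T F = {\<lambda>x. 0})
     \<and> (\<not> (\<exists>z. adj_spectrum T = {z}) \<longrightarrow> adj_point_spectrum T = {})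
     \<and> adj_property_C T
     \<and> (\<forall>\<phi>\<in>cdual. \<phi> \<noteq> (\<lambda>x. 0) \<longrightarrow> adj_local_spectrum T \<phi> = adj_spectrum T)
     \<and> (\<forall>\<phi>\<in>cdual. \<phi> \<noteq> (\<lambda>x. 0) \<longrightarrow>
          adj_local_spectral_radius T \<phi> = ereal (adj_spectral_radius T))
     \<and> (\<forall>M. dsubspace M \<and> dclosed M \<and> M \<noteq> {\<lambda>x. 0} \<and>
           (\<forall>\<phi>\<in>M. adj T \<phi> \<in> M) \<longrightarrow>
           adj_spectrum T \<subseteq> dspectrum_on M (adj T) \<and>
           dspectrum_on M (adj T) \<subseteq> full_spectrum (adj_spectrum T))"
proof -
  have D: "dense_hyp T" unfolding dense_hyp_def using dense by blast
  have iii: "\<forall>\<phi>\<in>cdual. \<phi> \<noteq> (\<lambda>x. 0) \<longrightarrow> adj_local_spectrum T \<phi> = adj_spectrum T"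
    using local_spectrum_eq[OF T D] by blast
  have iv: "\<forall>\<phi>\<in>cdual. \<phi> \<noteq> (\<lambda>x. 0) \<longrightarrow>
          adj_local_spectral_radius T \<phi> = ereal (adj_spectral_radius T)"
  proof (intro ballI impI)
    fix \<phi> :: "'a \<Rightarrow> complex" assume \<phi>: "\<phi> \<in> cdual" and nz: "\<phi> \<noteq> (\<lambda>x. 0)"
    show "adj_local_spectral_radius T \<phi> = ereal (adj_spectral_radius T)"
      by (rule antisym[OF upper_radius[OF T D \<phi> nz] lower_radius[OF T D \<phi> nz]])
  qed
  show ?thesis
    using claim1[OF T D] claim_i[OF T D] claim_ii[OF T D] iii iv claim_v[OF T D] by blast
qed


end
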